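(* Fix a cooperative Markov game, target and avoid sets, and a stationary joint policy $\pi$ with $v^{full}>0$, as described in the context. Let $p\in[0,1]$. Suppose the loss time in imaginary play (Algorithm 1) is random, independent of the game's randomness, with $\Pr(t_{loss}=t)=(1-p)^tp$ for $t=0,1,2,\dots$. Let $v^{img}$ be the resulting reach-avoid probability. Then $$v^{img}\ge\max\Big(v^{full}-\sqrt{1-\exp(-C_\pi)},\;v^{full}(1-p)^{\,l^{full}/v^{full}}\Big).$$
   Context: Multiagent model: there are $N$ agents. Agent $i$ is modeled by a finite MDP $\mathcal{M}^i=(\mathcal{S}^i,s_I^i,\mathcal{A}^i,\mathcal{T}^i)$. Here $\mathcal{S}^i$ is a finite state set, $s_I^i\in\mathcal{S}^i$ is the initial state, $\mathcal{A}^i$ is a finite action set, and $\mathcal{T}^i:\mathcal{S}^i\times\mathcal{A}^i\to\Delta(\mathcal{S}^i)$ is the transition kernel. The cooperative Markov game has joint state set $\mathbf{S}=\prod_i\mathcal{S}^i$, joint initial state $\mathbf{s}_I=(s_I^1,\dots,s_I^N)$, and joint action set $\mathbf{A}=\prod_i\mathcal{A}^i$. Its transition kernel is $\mathbf{T}(\mathbf{s},\mathbf{a},\mathbf{y})=\prod_{i}\mathcal{T}^i(s^i,a^i,y^i)$. A stationary joint policy is a map $\pi:\mathbf{S}\to\Delta(\mathbf{A})$. A joint path is an infinite sequence $\mathbf{s}_0\mathbf{a}_0\mathbf{s}_1\mathbf{a}_1\cdots\in(\mathbf{S}\times\mathbf{A})^\omega$ with $\mathbf{s}_0=\mathbf{s}_I$.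 All random sampling below is mutually independent given the stated conditioning. Full-communication execution: at each time $t$, $\mathbf{a}_t\sim\pi(\mathbf{s}_t)$ is drawn once for the whole team. Each agent $i$ then moves to $s^i_{t+1}\sim\mathcal{T}^i(s^i_t,a^i_t)$. $\Gamma^{full}$ denotes the resulting distribution over joint paths. Imaginary play with loss time $t_{loss}\in\{0,1,\dots\}\cup\{\infty\}$ (Algorithm 1): - For $t<t_{loss}$, the team acts exactly as under full communication. Each agent $i$ records $\hat s^j_{t,i}=s^j_t$ for all $j\ne i$, and records $\hat{\mathbf a}_{t,i}=\mathbf a_t$. - For $t\ge t_{loss}$, each agent $i$ acts separately and does not observe the others. First it sets its imaginary teammate states. If $t=0$, it sets $\hat s^j_{0,i}=s_I^j$ for $j\neq i$. Otherwise it samples $\hat s^j_{t,i}\sim\mathcal{T}^j(\hat s^j_{t-1,i},\hat a^j_{t-1,i})$ for $j\ne i$, where $\hat a^j_{t-1,i}$ is the $j$-th component of $\hat{\mathbf a}_{t-1,i}$. - Agent $i$ then samples its own joint action $\hat{\mathbf a}_{t,i}\sim\pi(\hat s^1_{t,i},\dots,\hat s^{i-1}_{t,i},s^i_t,\hat s^{i+1}_{t,i},\dots,\hat s^N_{t,i})$. - Agent $i$ executes only its own component $\hat a^i_{t,i}$, and moves to $s^i_{t+1}\sim\mathcal{T}^i(s^i_t,\hat a^i_{t,i})$. - The realized joint action at time $t$ is $\mathbf a_t=(\hat a^1_{t,1},\dots,\hat a^N_{t,N})$. $\Gamma^{img}_{t_{loss}}$ denotes the induced distribution over realized joint paths. Total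 correlation: let $\mathbf X$ be the random joint path under $\Gamma^{full}$, and $X^i$ its projection $s^i_0a^i_0s^i_1a^i_1\cdots$ onto agent $i$. The total correlation of $\pi$ is $$C_\pi=\Big[\sum_{i=1}^N H(X^i)\Big]-H(\mathbf X)=KL(\Gamma^{full}\|\Gamma^{img}_0).$$ The equality holds because $\Gamma^{img}_0$ is the product of the agents' marginal path distributions under $\Gamma^{full}$. Reach-avoid objective: a target set $\mathbf S_{\mathcal T}\subseteq\mathbf S$ and an avoid set $\mathbf S_{\mathcal A}\subseteq\mathbf S$ are given. A joint path succeeds if there is $M$ with $\mathbf s_M\in\mathbf S_{\mathcal T}$ and $\mathbf s_t\notin\mathbf S_{\mathcal A}$ for all $t<M$. $v^{full}$ is the success probability under $\Gamma^{full}$. Path length: $\mathbf S_{\mathcal D}$ is the set of joint states from which, under $\pi$ with full communication, the probability of success is $0$. For a path $\xi$, $len(\xi)=\min\{t+1:\mathbf s_t\in\mathbf S_{\mathcal T}\cup\mathbf S_{\mathcal D}\}$. Finally, $l^{full}=\mathbb E_{\xi\sim\Gamma^{full}}[len(\xi)]$. *)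

theory Defs
  imports "HOL-Probability.Probability"
begin

(* T i s a is the transition kernel T^i(s,a); pol is the stationary joint policy pi.
   A (finite) path prefix of length n is the list [(s_0,a_0),...,(s_(n-1),a_(n-1))]. *)

type_synonym ('i,'s,'a) prefix = "(('i \<Rightarrow> 's) \<times> ('i \<Rightarrow> 'a)) list"

definition joint_step ::
  "('i::finite \<Rightarrow> 's \<Rightarrow> 'a \<Rightarrow> 's pmf) \<Rightarrow> ('i \<Rightarrow> 's) \<Rightarrow> ('i \<Rightarrow> 'a) \<Rightarrow> ('i \<Rightarrow> 's) pmf" where
  "joint_step T s a = Pi_pmf UNIV undefined (\<lambda>i. T i (s i) (a i))"

primrec full_prefix ::
  "('i::finite \<Rightarrow> 's \<Rightarrow> 'a \<Rightarrow> 's pmf) \<Rightarrow> (('i \<Rightarrow> 's) \<Rightarrow> ('i \<Rightarrow> 'a) pmf) \<Rightarrow> nat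
   \<Rightarrow> ('i \<Rightarrow> 's) \<Rightarrow> ('i,'s,'a) prefix pmf" where
  "full_prefix T pol 0 s = return_pmf []"
| "full_prefix T pol (Suc n) s =
     bind_pmf (pol s) (\<lambda>a. bind_pmf (joint_step T s a) (\<lambda>s'.
     bind_pmf (full_prefix T pol n s') (\<lambda>rest. return_pmf ((s, a) # rest))))"

(* Agent i acting separately after the loss time.  sh is agent i's current imagined
   joint state \<hat>s_{t,i} (its own component sh i is its real state s^i_t).
   It samples its joint action \<hat>a_{t,i} ~ pi(sh), executes component i (real move
   s^i_{t+1} ~ T^i(s^i_t, \<hat>a^i_{t,i})) and imagines the teammates' next states
   \<hat>s^j_{t+1,i} ~ T^j(\<hat>s^j_{t,i}, \<hat>a^j_{t,i}); all sampled independently. *)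
primrec agent_run ::
  "('i::finite \<Rightarrow> 's \<Rightarrow> 'a \<Rightarrow> 's pmf) \<Rightarrow> (('i \<Rightarrow> 's) \<Rightarrow> ('i \<Rightarrow> 'a) pmf) \<Rightarrow> 'i \<Rightarrow> nat
   \<Rightarrow> ('i \<Rightarrow> 's) \<Rightarrow> ('s \<times> 'a) list pmf" where
  "agent_run T pol i 0 sh = return_pmf []"
| "agent_run T pol i (Suc n) sh =
     bind_pmf (pol sh) (\<lambda>ah. bind_pmf (joint_step T sh ah) (\<lambda>sh'.
     bind_pmf (agent_run T pol i n sh') (\<lambda>rest. return_pmf ((sh i, ah i) # rest))))"

(* all agents act separately and independently for n steps; B i is agent i's imagined
   joint state at the current time (with B i i its real state).  The realized joint
   path collects the own components. *)
definition indep_phase ::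
  "('i::finite \<Rightarrow> 's \<Rightarrow> 'a \<Rightarrow> 's pmf) \<Rightarrow> (('i \<Rightarrow> 's) \<Rightarrow> ('i \<Rightarrow> 'a) pmf) \<Rightarrow> nat
   \<Rightarrow> ('i \<Rightarrow> 'i \<Rightarrow> 's) \<Rightarrow> ('i,'s,'a) prefix pmf" where
  "indep_phase T pol n B =
     map_pmf (\<lambda>trs. map (\<lambda>t. (\<lambda>i. fst (trs i ! t), \<lambda>i. snd (trs i ! t))) [0..<n])
       (Pi_pmf UNIV undefined (\<lambda>i. agent_run T pol i n (B i)))"

(* imaginary play with loss time Suc k >= 1: full communication at times 0..k, then
   at time Suc k each agent i samples its imagined teammate states
   \<hat>s^j ~ T^j(s^j_k, a^j_k) (independently of everything else), keeps its real
   state, and continues separately. *)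
primrec loss_prefix ::
  "('i::finite \<Rightarrow> 's \<Rightarrow> 'a \<Rightarrow> 's pmf) \<Rightarrow> (('i \<Rightarrow> 's) \<Rightarrow> ('i \<Rightarrow> 'a) pmf) \<Rightarrow> nat \<Rightarrow> nat
   \<Rightarrow> ('i \<Rightarrow> 's) \<Rightarrow> ('i,'s,'a) prefix pmf" where
  "loss_prefix T pol k 0 s = return_pmf []"
| "loss_prefix T pol k (Suc n) s =
     bind_pmf (pol s) (\<lambda>a. bind_pmf (joint_step T s a) (\<lambda>s'.
     bind_pmf
       (case k of
          0 \<Rightarrow> bind_pmf (Pi_pmf UNIV undefined (\<lambda>i. joint_step T s a))
                 (\<lambda>imag. indep_phase T pol n (\<lambda>i. (imag i)(i := s' i)))
        | Suc k' \<Rightarrow> loss_prefix T pol k' n s')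
       (\<lambda>rest. return_pmf ((s, a) # rest))))"

(* imaginary play (Algorithm 1) with loss time L (None = infinity), first n steps *)
definition img_prefix ::
  "('i::finite \<Rightarrow> 's \<Rightarrow> 'a \<Rightarrow> 's pmf) \<Rightarrow> (('i \<Rightarrow> 's) \<Rightarrow> ('i \<Rightarrow> 'a) pmf) \<Rightarrow> ('i \<Rightarrow> 's)
   \<Rightarrow> nat option \<Rightarrow> nat \<Rightarrow> ('i,'s,'a) prefix pmf" where
  "img_prefix T pol sI L n =
     (case L of
        None \<Rightarrow> full_prefix T pol n sI
      | Some 0 \<Rightarrow> indep_phase T pol n (\<lambda>i. sI)
      | Some (Suc k) \<Rightarrow> loss_prefix T pol k n sI)"

(* random loss time: Pr(t_loss = t) = (1-p)^t p; for p = 0 this gives t_loss = infinity a.s. *)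
definition loss_dist :: "real \<Rightarrow> nat option pmf" where
  "loss_dist p = (if p = 0 then return_pmf None else map_pmf Some (geometric_pmf p))"

definition img_geo_prefix ::
  "('i::finite \<Rightarrow> 's \<Rightarrow> 'a \<Rightarrow> 's pmf) \<Rightarrow> (('i \<Rightarrow> 's) \<Rightarrow> ('i \<Rightarrow> 'a) pmf) \<Rightarrow> ('i \<Rightarrow> 's)
   \<Rightarrow> real \<Rightarrow> nat \<Rightarrow> ('i,'s,'a) prefix pmf" where
  "img_geo_prefix T pol sI p n = bind_pmf (loss_dist p) (\<lambda>L. img_prefix T pol sI L n)"

definition succ_prefix :: "('i \<Rightarrow> 's) set \<Rightarrow> ('i \<Rightarrow> 's) set \<Rightarrow> ('i,'s,'a) prefix \<Rightarrow> bool" where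
  "succ_prefix ST SA xs \<longleftrightarrow>
     (\<exists>M < length xs. fst (xs ! M) \<in> ST \<and> (\<forall>t < M. fst (xs ! t) \<notin> SA))"

(* probability of the (open) reach-avoid event of the path distribution whose
   length-n prefix distributions are P n: the limit (supremum) over the increasing
   cylinder events "success by time n-1" *)
definition reach_prob ::
  "('i \<Rightarrow> 's) set \<Rightarrow> ('i \<Rightarrow> 's) set \<Rightarrow> (nat \<Rightarrow> ('i,'s,'a) prefix pmf) \<Rightarrow> real" where
  "reach_prob ST SA P = (SUP n. measure_pmf.prob (P n) {xs. succ_prefix ST SA xs})"

definition v_full where
  "v_full T pol sI ST SA = reach_prob ST SA (\<lambda>n. full_prefix T pol n sI)"

definition v_img where
  "v_img T pol sI ST SA p = reach_prob ST SA (\<lambda>n. img_geo_prefix T pol sI p n)"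

definition dead_set where
  "dead_set T pol ST SA = {s. reach_prob ST SA (\<lambda>n. full_prefix T pol n s) = 0}"

(* min(len(xi), n) computed from the length-n prefix *)
definition trunc_len :: "('i \<Rightarrow> 's) set \<Rightarrow> nat \<Rightarrow> ('i,'s,'a) prefix \<Rightarrow> nat" where
  "trunc_len TD n xs =
     (if \<exists>t < n. fst (xs ! t) \<in> TD then Suc (LEAST t. fst (xs ! t) \<in> TD) else n)"

(* l^full = E[len] = sup_n E[min(len,n)]  (monotone convergence) *)
definition l_full :: "_ \<Rightarrow> _ \<Rightarrow> _ \<Rightarrow> _ \<Rightarrow> _ \<Rightarrow> ennreal" where
  "l_full T pol sI ST SA =
     (SUP n. \<integral>\<^sup>+ xs. of_nat (trunc_len (ST \<union> dead_set T pol ST SA) n xs)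
              \<partial>measure_pmf (full_prefix T pol n sI))"

definition entropy_pmf :: "'x pmf \<Rightarrow> real" where
  "entropy_pmf P = (\<Sum>x\<in>set_pmf P. - pmf P x * ln (pmf P x))"

definition tc_prefix where
  "tc_prefix T pol sI n =
     (\<Sum>i\<in>UNIV. entropy_pmf (map_pmf (map (\<lambda>(s, a). (s i, a i))) (full_prefix T pol n sI)))
     - entropy_pmf (full_prefix T pol n sI)"

(* C_pi for infinite paths: limit (supremum) of the prefix total correlations; may be infinite *)
definition total_corr :: "_ \<Rightarrow> _ \<Rightarrow> _ \<Rightarrow> ereal" where
  "total_corr T pol sI = (SUP n. ereal (tc_prefix T pol sI n))"

definition exp_neg :: "ereal \<Rightarrow> real" where
  "exp_neg C = (if C = \<infinity> then 0 else exp (- real_of_ereal C))"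

end

theory Submission
  imports Defs
begin

lemma int_bind_fin:
  fixes f :: "'b \<Rightarrow> real"
  assumes fin: "finite (set_pmf (bind_pmf M N))"
  shows "(\<integral>x. f x \<partial>measure_pmf (bind_pmf M N)) = (\<integral>y. (\<integral>x. f x \<partial>measure_pmf (N y)) \<partial>measure_pmf M)"
proof -
  define S where "S = set_pmf (bind_pmf M N)"
  define g where "g = (\<lambda>x. if x \<in> S then f x else 0)"
  define B where "B = (\<Sum>x\<in>S. \<bar>f x\<bar>)"
  have gB: "\<bar>g x\<bar> \<le> B" for x
    unfolding g_def B_def using fin S_def
    by (auto intro: member_le_sum[where f="\<lambda>x. \<bar>f x\<bar>"])
  have "(\<integral>x. f x \<partial>measure_pmf (bind_pmf M N)) = (\<integral>x. g x \<partial>measure_pmf (bind_pmf M N))"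
    by (intro integral_cong_AE) (auto simp: AE_measure_pmf_iff g_def S_def)
  also have "\<dots> = (\<integral>y. (\<integral>x. g x \<partial>measure_pmf (N y)) \<partial>measure_pmf M)"
    unfolding measure_pmf_bind
    by (rule integral_bind[where K="count_space UNIV" and B=B and B'=1])
       (auto simp: gB measure_pmf_in_subprob_algebra intro!: prob_space.finite_measure prob_space_measure_pmf
             measurable_pmf_measure1 measure_pmf.emeasure_space_le_1)
  also have "\<dots> = (\<integral>y. (\<integral>x. f x \<partial>measure_pmf (N y)) \<partial>measure_pmf M)"
    by (intro integral_cong_AE) (auto simp: AE_measure_pmf_iff g_def S_def intro!: integral_cong_AE)
  finally show ?thesis .
qed

lemma int_fin_sum:
  fixes f :: "'b \<Rightarrow> real"
  assumes "finite (set_pmf M)"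
  shows "(\<integral>x. f x \<partial>measure_pmf M) = (\<Sum>x\<in>set_pmf M. pmf M x * f x)"
  using assms by (subst integral_measure_pmf_real[of "set_pmf M"]) (auto simp: mult.commute)

lemma meas_fin_sum:
  assumes "finite A" "set_pmf M \<subseteq> A"
  shows "measure_pmf.prob M E = (\<Sum>x\<in>A \<inter> E. pmf M x)"
proof -
  have "measure_pmf.prob M E = measure_pmf.prob M (A \<inter> E)"
    using assms by (intro measure_pmf.finite_measure_eq_AE) (auto simp: AE_measure_pmf_iff)
  also have "\<dots> = (\<Sum>x\<in>A \<inter> E. pmf M x)"
    using assms by (intro measure_measure_pmf_finite) auto
  finally show ?thesis .
qed

lemma gibbs:
  fixes c :: "'b \<Rightarrow> real"
  assumes fin: "finite (set_pmf M)" and pos: "\<And>x. x \<in> set_pmf M \<Longrightarrow> c x > 0"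
    and sum: "(\<Sum>x\<in>set_pmf M. c x) \<le> 1"
  shows "(\<integral>x. ln (c x / pmf M x) \<partial>measure_pmf M) \<le> 0"
proof -
  have "(\<integral>x. ln (c x / pmf M x) \<partial>measure_pmf M) = (\<Sum>x\<in>set_pmf M. pmf M x * ln (c x / pmf M x))"
    by (rule int_fin_sum[OF fin])
  also have "\<dots> \<le> (\<Sum>x\<in>set_pmf M. pmf M x * (c x / pmf M x - 1))"
  proof (intro sum_mono mult_left_mono)
    fix x assume x: "x \<in> set_pmf M"
    then have "pmf M x > 0" by (simp add: pmf_positive)
    then show "ln (c x / pmf M x) \<le> c x / pmf M x - 1" using pos[OF x]
      by (intro ln_le_minus_one) simp
  qed simp
  also have "\<dots> = (\<Sum>x\<in>set_pmf M. c x - pmf M x)"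
    by (intro sum.cong) (auto simp: field_simps set_pmf_iff)
  also have "\<dots> = (\<Sum>x\<in>set_pmf M. c x) - 1"
    using sum_pmf_eq_1[OF fin, of M] by (simp add: sum_subtractf)
  finally show ?thesis using sum by simp
qed

lemma pmf_map_ge: "pmf (map_pmf g M) (g x) \<ge> pmf M x"
proof -
  have "pmf M x = measure_pmf.prob M {x}" by (simp add: measure_pmf_single)
  also have "\<dots> \<le> measure_pmf.prob M (g -` {g x})"
    by (intro measure_pmf.finite_measure_mono) auto
  finally show ?thesis by (simp add: pmf_map)
qed

lemma pmf_map_inj_set:
  assumes inj: "inj_on g A" and sub: "set_pmf M \<subseteq> A" and y: "y \<in> A"
  shows "pmf (map_pmf g M) (g y) = pmf M y"
proof -
  have "pmf (map_pmf g M) (g y) = measure_pmf.prob M (g -` {g y})" by (simp add: pmf_map)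
  also have "\<dots> = measure_pmf.prob M {y}"
    using inj sub y
    by (intro measure_pmf.finite_measure_eq_AE) (auto simp: AE_measure_pmf_iff inj_on_def)
  finally show ?thesis by (simp add: measure_pmf_single)
qed

lemma BH:
  assumes finP: "finite (set_pmf P)" and finQ: "finite (set_pmf Q)"
    and pos: "\<And>x. x \<in> set_pmf P \<Longrightarrow> pmf Q x > 0"
  shows "measure_pmf.prob P E - measure_pmf.prob Q E
           \<le> sqrt (1 - exp (- (\<integral>x. ln (pmf P x / pmf Q x) \<partial>measure_pmf P)))"
proof -
  define A where "A = set_pmf P \<union> set_pmf Q"
  define p where "p = pmf P"
  define q where "q = pmf Q"
  have finA: "finite A" using finP finQ by (simp add: A_def)
  have p1: "(\<Sum>x\<in>A. p x) = 1" unfolding p_def by (rule sum_pmf_eq_1[OF finA]) (auto simp: A_def)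
  have q1: "(\<Sum>x\<in>A. q x) = 1" unfolding q_def by (rule sum_pmf_eq_1[OF finA]) (auto simp: A_def)
  have p0: "p x \<ge> 0" and q0: "q x \<ge> 0" for x by (simp_all add: p_def q_def)
  define m where "m = (\<Sum>x\<in>A. min (p x) (q x))"
  define KL where "KL = (\<integral>x. ln (pmf P x / pmf Q x) \<partial>measure_pmf P)"
  have i: "measure_pmf.prob P E - measure_pmf.prob Q E \<le> 1 - m"
  proof -
    have "measure_pmf.prob P E - measure_pmf.prob Q E = (\<Sum>x\<in>A \<inter> E. p x - q x)"
      using meas_fin_sum[OF finA, of P E] meas_fin_sum[OF finA, of Q E]
      by (simp add: A_def p_def q_def sum_subtractf)
    also have "\<dots> \<le> (\<Sum>x\<in>A \<inter> E. p x - min (p x) (q x))"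
      by (intro sum_mono) auto
    also have "\<dots> \<le> (\<Sum>x\<in>A. p x - min (p x) (q x))"
      by (intro sum_mono2 finA) auto
    also have "\<dots> = 1 - m" using p1 by (simp add: m_def sum_subtractf)
    finally show ?thesis .
  qed
  define BC where "BC = (\<Sum>x\<in>A. sqrt (p x * q x))"
  have ii: "BC\<^sup>2 \<le> m * (2 - m)"
  proof -
    have "BC = (\<Sum>x\<in>A. sqrt (min (p x) (q x)) * sqrt (max (p x) (q x)))"
      unfolding BC_def by (intro sum.cong) (auto simp: real_sqrt_mult[symmetric] min_def max_def mult.commute)
    then have "BC\<^sup>2 \<le> (\<Sum>x\<in>A. (sqrt (min (p x) (q x)))\<^sup>2) * (\<Sum>x\<in>A. (sqrt (max (p x) (q x)))\<^sup>2)"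
      using Cauchy_Schwarz_ineq_sum by metis
    also have "\<dots> = m * (\<Sum>x\<in>A. max (p x) (q x))"
    proof -
      have "(\<Sum>x\<in>A. (sqrt (max (p x) (q x)))\<^sup>2) = (\<Sum>x\<in>A. max (p x) (q x))"
        using p0 q0 by (intro sum.cong refl) (simp add: le_max_iff_disj)
      moreover have "(\<Sum>x\<in>A. (sqrt (min (p x) (q x)))\<^sup>2) = m"
        unfolding m_def using p0 q0 by (intro sum.cong refl) simp
      ultimately show ?thesis by simp
    qed
    also have "(\<Sum>x\<in>A. max (p x) (q x)) = (\<Sum>x\<in>A. p x + q x - min (p x) (q x))"
      by (intro sum.cong) auto
    also have "\<dots> = 2 - m" using p1 q1 by (simp add: m_def sum_subtractf sum.distrib)
    finally show ?thesis .
  qed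
  have m0: "0 \<le> m" unfolding m_def using p0 q0 by (intro sum_nonneg) auto
  have iii: "exp (- KL / 2) \<le> BC"
  proof -
    define S where "S = set_pmf P"
    have finS: "finite S" using finP by (simp add: S_def)
    have Sne: "S \<noteq> {}" unfolding S_def by (rule set_pmf_not_empty)
    have pS: "\<And>x. x \<in> S \<Longrightarrow> p x > 0" by (simp add: S_def p_def pmf_positive)
    have qS: "\<And>x. x \<in> S \<Longrightarrow> q x > 0" by (simp add: S_def q_def pos)
    have KLs: "KL = (\<Sum>x\<in>S. p x * ln (p x / q x))"
      unfolding KL_def S_def p_def q_def by (rule int_fin_sum[OF finP])
    have sp1: "(\<Sum>x\<in>S. p x) = 1" unfolding S_def p_def by (rule sum_pmf_eq_1[OF finP]) auto
    have "exp (\<Sum>x\<in>S. p x *\<^sub>R (ln (q x / p x) / 2)) \<le> (\<Sum>x\<in>S. p x * exp (ln (q x / p x) / 2))"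
      by (rule convex_on_sum[OF finS Sne exp_convex sp1]) (auto simp: less_imp_le pS)
    also have "(\<Sum>x\<in>S. p x *\<^sub>R (ln (q x / p x) / 2)) = - KL / 2"
      unfolding KLs sum_negf[symmetric] sum_divide_distrib
      proof (intro sum.cong refl)
        fix x assume x: "x \<in> S"
        have "ln (q x / p x) = - ln (p x / q x)" using pS[OF x] qS[OF x] by (simp add: ln_div)
        then show "p x *\<^sub>R (ln (q x / p x) / 2) = - (p x * ln (p x / q x)) / 2" by (simp only: mult_minus_right minus_divide_left real_scaleR_def times_divide_eq_right)
      qed
    also have "(\<Sum>x\<in>S. p x * exp (ln (q x / p x) / 2)) = (\<Sum>x\<in>S. sqrt (p x * q x))"
    proof (intro sum.cong refl)
      fix x assume x: "x \<in> S"
      have pq: "q x / p x > 0" using pS[OF x] qS[OF x] by simp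
      have "exp (ln (q x / p x) / 2) = exp (ln (sqrt (q x / p x)))"
        using pq by (simp add: ln_sqrt)
      also have "\<dots> = sqrt (q x / p x)" using pq by simp
      finally have e: "exp (ln (q x / p x) / 2) = sqrt (q x / p x)" .
      have "p x = sqrt (p x) * sqrt (p x)" using pS[OF x] by simp
      then have "p x * sqrt (q x / p x) = sqrt (p x) * sqrt (p x * (q x / p x))"
        by (metis mult.assoc real_sqrt_mult)
      also have "p x * (q x / p x) = q x" using pS[OF x] by simp
      finally show "p x * exp (ln (q x / p x) / 2) = sqrt (p x * q x)"
        using e by (simp add: real_sqrt_mult)
    qed
    also have "\<dots> \<le> BC" unfolding BC_def
      by (intro sum_mono2 finA) (auto simp: S_def A_def p0 q0)
    finally show ?thesis .
  qed
  have "exp (- KL) = (exp (- KL / 2))\<^sup>2" by (simp add: power2_eq_square exp_add[symmetric])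
  also have "\<dots> \<le> BC\<^sup>2" using iii by (intro power_mono) auto
  finally have "(1 - m)\<^sup>2 \<le> 1 - exp (- KL)" using ii by (simp add: power2_eq_square algebra_simps)
  then have "\<bar>1 - m\<bar> \<le> sqrt (1 - exp (- KL))"
    using real_sqrt_le_mono by fastforce
  then show ?thesis using i unfolding KL_def by linarith
qed

lemma Pi_map_dep:
  fixes S :: "'i::finite \<Rightarrow> 'b pmf"
  shows "map_pmf (\<lambda>imag i. f i (imag i)) (Pi_pmf UNIV d2 (\<lambda>i. S i))
       = Pi_pmf UNIV d3 (\<lambda>i. map_pmf (f i) (S i))"
proof -
  have "Pi_pmf UNIV d3 (\<lambda>i. map_pmf (f i) (S i)) = Pi_pmf UNIV d3 (\<lambda>i. bind_pmf (S i) (\<lambda>g. return_pmf (f i g)))"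
    by (simp add: map_pmf_def)
  also have "\<dots> = bind_pmf (Pi_pmf UNIV d2 S) (\<lambda>imag. Pi_pmf UNIV d3 (\<lambda>i. return_pmf (f i (imag i))))"
    by (rule Pi_pmf_bind) simp
  also have "\<dots> = map_pmf (\<lambda>imag i. f i (imag i)) (Pi_pmf UNIV d2 S)"
    by (simp add: map_pmf_def)
  finally show ?thesis by simp
qed

lemma upd_indep:
  fixes p :: "'i::finite \<Rightarrow> 's pmf"
  shows "bind_pmf (p i) (\<lambda>x. map_pmf (\<lambda>g. g(i := x)) (Pi_pmf UNIV d p)) = Pi_pmf UNIV d p"
proof -
  define R where "R = Pi_pmf (UNIV - {i}) d p"
  have U: "UNIV = insert i (UNIV - {i})" by auto
  have S: "Pi_pmf UNIV d p = map_pmf (\<lambda>(y,f). f(i:=y)) (pair_pmf (p i) R)"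
    unfolding R_def by (subst U, subst Pi_pmf_insert) auto
  have "bind_pmf (p i) (\<lambda>x. map_pmf (\<lambda>g. g(i := x)) (Pi_pmf UNIV d p))
      = bind_pmf (p i) (\<lambda>x. map_pmf (\<lambda>f. f(i := x)) R)"
  proof (intro bind_pmf_cong refl)
    fix x
    have "map_pmf (\<lambda>f. f(i := x)) R = map_pmf (\<lambda>f. f(i := x)) (map_pmf snd (pair_pmf (p i) R))"
      by (simp add: map_snd_pair_pmf)
    then show "map_pmf (\<lambda>g. g(i := x)) (Pi_pmf UNIV d p) = map_pmf (\<lambda>f. f(i := x)) R"
      unfolding S by (simp add: pmf.map_comp o_def case_prod_unfold)
  qed
  also have "\<dots> = Pi_pmf UNIV d p"
    unfolding S by (simp add: pair_pmf_def map_pmf_def bind_assoc_pmf bind_return_pmf case_prod_unfold)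
  finally show ?thesis .
qed

lemma swap_diag:
  fixes p :: "'i::finite \<Rightarrow> 's pmf"
  shows "bind_pmf (Pi_pmf UNIV d p) (\<lambda>s'. map_pmf (\<lambda>imag i. (imag i)(i := s' i)) (Pi_pmf UNIV d2 (\<lambda>i. Pi_pmf UNIV d p)))
       = Pi_pmf UNIV d2 (\<lambda>i. Pi_pmf UNIV d p)"
proof -
  have "bind_pmf (Pi_pmf UNIV d p) (\<lambda>s'. map_pmf (\<lambda>imag i. (imag i)(i := s' i)) (Pi_pmf UNIV d2 (\<lambda>i. Pi_pmf UNIV d p)))
      = bind_pmf (Pi_pmf UNIV d p) (\<lambda>s'. Pi_pmf UNIV d2 (\<lambda>i. map_pmf (\<lambda>g. g(i := s' i)) (Pi_pmf UNIV d p)))"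
    by (intro bind_pmf_cong refl Pi_map_dep)
  also have "\<dots> = Pi_pmf UNIV d2 (\<lambda>i. bind_pmf (p i) (\<lambda>x. map_pmf (\<lambda>g. g(i := x)) (Pi_pmf UNIV d p)))"
    by (rule Pi_pmf_bind[symmetric]) simp
  also have "\<dots> = Pi_pmf UNIV d2 (\<lambda>i. Pi_pmf UNIV d p)"
    by (simp add: upd_indep)
  finally show ?thesis .
qed

abbreviation prj :: "'i \<Rightarrow> ('i \<Rightarrow> 's) \<times> ('i \<Rightarrow> 'a) \<Rightarrow> 's \<times> 'a" where
  "prj i \<equiv> (\<lambda>(s, a). (s i, a i))"

definition comb :: "nat \<Rightarrow> ('i \<Rightarrow> ('s \<times> 'a) list) \<Rightarrow> ('i,'s,'a) prefix" where
  "comb m trs = map (\<lambda>t. (\<lambda>i. fst (trs i ! t), \<lambda>i. snd (trs i ! t))) [0..<m]"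

definition prodm :: "nat \<Rightarrow> ('i::finite,'s,'a) prefix pmf \<Rightarrow> ('i,'s,'a) prefix pmf" where
  "prodm m \<mu> = map_pmf (comb m) (Pi_pmf UNIV undefined (\<lambda>i. map_pmf (map (prj i)) \<mu>))"

lemma indep_phase_comb: "indep_phase T pol n B = map_pmf (comb n) (Pi_pmf UNIV undefined (\<lambda>i. agent_run T pol i n (B i)))"
  by (simp add: indep_phase_def comb_def[abs_def])

lemma agent_run_marg: "agent_run T pol i n sh = map_pmf (map (prj i)) (full_prefix T pol n sh)"
  by (induction n arbitrary: sh) (simp_all add: map_bind_pmf bind_map_pmf)

lemma F_len: "x \<in> set_pmf (full_prefix T pol n s) \<Longrightarrow> length x = n"
  by (induction n arbitrary: x s) auto

definition Pd where "Pd T pol m sa = bind_pmf (joint_step T (fst sa) (snd sa)) (\<lambda>s'. full_prefix T pol m s')"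
definition Qd where "Qd T pol m sa = bind_pmf (joint_step T (fst sa) (snd sa)) (\<lambda>s'.
   bind_pmf (Pi_pmf UNIV undefined (\<lambda>i. joint_step T (fst sa) (snd sa)))
     (\<lambda>imag. indep_phase T pol m (\<lambda>i. (imag i)(i := s' i))))"

lemma FD: "full_prefix T pol (Suc k + m) s =
  bind_pmf (full_prefix T pol (Suc k) s) (\<lambda>h. map_pmf (\<lambda>r. h @ r) (Pd T pol m (last h)))"
proof (induction k arbitrary: s)
  case 0
  then show ?case by (simp add: Pd_def map_bind_pmf bind_return_pmf bind_assoc_pmf map_pmf_def)
next
  case (Suc k)
  have "full_prefix T pol (Suc (Suc k) + m) s = bind_pmf (pol s) (\<lambda>a. bind_pmf (joint_step T s a) (\<lambda>s'.
     bind_pmf (full_prefix T pol (Suc k + m) s') (\<lambda>rest. return_pmf ((s, a) # rest))))" by simp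
  also have "\<dots> = bind_pmf (pol s) (\<lambda>a. bind_pmf (joint_step T s a) (\<lambda>s'.
     bind_pmf (full_prefix T pol (Suc k) s') (\<lambda>h. map_pmf (\<lambda>r. ((s,a) # h) @ r) (Pd T pol m (last ((s,a) # h))))))"
    unfolding Suc.IH bind_assoc_pmf
  proof (intro bind_pmf_cong refl)
    fix a s' h assume "h \<in> set_pmf (full_prefix T pol (Suc k) s')"
    then have "h \<noteq> []" by (auto dest!: F_len)
    then show "map_pmf (\<lambda>r. h @ r) (Pd T pol m (last h)) \<bind> (\<lambda>rest. return_pmf ((s, a) # rest)) =
         map_pmf (\<lambda>r. ((s, a) # h) @ r) (Pd T pol m (last ((s, a) # h)))"
      by (simp add: bind_map_pmf map_pmf_def bind_assoc_pmf bind_return_pmf)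
  qed
  also have "\<dots> = bind_pmf (full_prefix T pol (Suc (Suc k)) s) (\<lambda>h. map_pmf (\<lambda>r. h @ r) (Pd T pol m (last h)))"
    by (simp only: full_prefix.simps(2)[of T pol "Suc k" s] bind_assoc_pmf bind_return_pmf)
  finally show ?case .
qed

lemma LD: "loss_prefix T pol k (Suc k + m) s =
  bind_pmf (full_prefix T pol (Suc k) s) (\<lambda>h. map_pmf (\<lambda>r. h @ r) (Qd T pol m (last h)))"
proof (induction k arbitrary: s)
  case 0
  then show ?case by (simp add: Qd_def map_bind_pmf bind_return_pmf bind_assoc_pmf map_pmf_def)
next
  case (Suc k)
  have "loss_prefix T pol (Suc k) (Suc (Suc k) + m) s = bind_pmf (pol s) (\<lambda>a. bind_pmf (joint_step T s a) (\<lambda>s'.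
     bind_pmf (loss_prefix T pol k (Suc k + m) s') (\<lambda>rest. return_pmf ((s, a) # rest))))" by simp
  also have "\<dots> = bind_pmf (pol s) (\<lambda>a. bind_pmf (joint_step T s a) (\<lambda>s'.
     bind_pmf (full_prefix T pol (Suc k) s') (\<lambda>h. map_pmf (\<lambda>r. ((s,a) # h) @ r) (Qd T pol m (last ((s,a) # h))))))"
    unfolding Suc.IH bind_assoc_pmf
  proof (intro bind_pmf_cong refl)
    fix a s' h assume "h \<in> set_pmf (full_prefix T pol (Suc k) s')"
    then have "h \<noteq> []" by (auto dest!: F_len)
    then show "map_pmf (\<lambda>r. h @ r) (Qd T pol m (last h)) \<bind> (\<lambda>rest. return_pmf ((s, a) # rest)) =
         map_pmf (\<lambda>r. ((s, a) # h) @ r) (Qd T pol m (last ((s, a) # h)))"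
      by (simp add: bind_map_pmf map_pmf_def bind_assoc_pmf bind_return_pmf)
  qed
  also have "\<dots> = bind_pmf (full_prefix T pol (Suc (Suc k)) s) (\<lambda>h. map_pmf (\<lambda>r. h @ r) (Qd T pol m (last h)))"
    by (simp only: full_prefix.simps(2)[of T pol "Suc k" s] bind_assoc_pmf bind_return_pmf)
  finally show ?case .
qed

lemma indep_phase_0: "indep_phase T pol 0 B = return_pmf []"
  by (simp add: indep_phase_def)

lemma LE: "n \<le> Suc k \<Longrightarrow> loss_prefix T pol k n s = full_prefix T pol n s"
proof (induction n arbitrary: k s)
  case 0
  then show ?case by simp
next
  case (Suc n)
  show ?case
  proof (cases k)
    case 0
    with Suc.prems have "n = 0" by simp
    with 0 show ?thesis by (simp add: indep_phase_0)
  next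
    case (Suc k')
    with Suc.prems Suc.IH[of k'] show ?thesis by simp
  qed
qed

lemma Qd_prodm: "Qd T pol m sa = prodm m (Pd T pol m sa)"
proof -
  define S where "S = joint_step T (fst sa) (snd sa)"
  define K where "K = (\<lambda>B. map_pmf (comb m) (Pi_pmf UNIV undefined (\<lambda>i. agent_run T pol i m (B i))))"
  have S': "S = Pi_pmf UNIV undefined (\<lambda>i. T i (fst sa i) (snd sa i))" by (simp add: S_def joint_step_def)
  have "Qd T pol m sa = bind_pmf S (\<lambda>s'. bind_pmf (Pi_pmf UNIV undefined (\<lambda>i. S)) (\<lambda>imag. K (\<lambda>i. (imag i)(i := s' i))))"
    by (simp add: Qd_def S_def K_def indep_phase_comb)
  also have "\<dots> = bind_pmf (bind_pmf S (\<lambda>s'. map_pmf (\<lambda>imag i. (imag i)(i := s' i)) (Pi_pmf UNIV undefined (\<lambda>i. S)))) K"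
    by (simp add: bind_assoc_pmf bind_map_pmf)
  also have "\<dots> = bind_pmf (Pi_pmf UNIV undefined (\<lambda>i. S)) K"
    unfolding S' by (subst swap_diag) (rule refl)
  also have "\<dots> = map_pmf (comb m) (bind_pmf (Pi_pmf UNIV undefined (\<lambda>i. S)) (\<lambda>imag. Pi_pmf UNIV undefined (\<lambda>i. agent_run T pol i m (imag i))))"
    by (simp add: K_def map_bind_pmf)
  also have "\<dots> = map_pmf (comb m) (Pi_pmf UNIV undefined (\<lambda>i. bind_pmf S (\<lambda>s'. agent_run T pol i m s')))"
    by (subst Pi_pmf_bind[symmetric]) simp_all
  also have "\<dots> = prodm m (Pd T pol m sa)"
    by (simp add: prodm_def Pd_def S_def agent_run_marg map_bind_pmf)
  finally show ?thesis .
qed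

lemma prj_inj:
  fixes e e' :: "('i \<Rightarrow> 's) \<times> ('i \<Rightarrow> 'a)"
  assumes "\<And>i. prj i e = prj i e'" shows "e = e'"
proof -
  have "fst e i = fst e' i \<and> snd e i = snd e' i" for i using assms[of i] by (simp add: case_prod_unfold)
  then show ?thesis by (simp add: prod_eq_iff fun_eq_iff)
qed

lemma split_inj: "inj (\<lambda>(h :: ('i,'s,'a) prefix) i. map (prj i) h)"
proof (rule injI)
  fix h h' :: "('i,'s,'a) prefix"
  assume eq: "(\<lambda>i. map (prj i) h) = (\<lambda>i. map (prj i) h')"
  have eqi: "map (prj i) h = map (prj i) h'" for i using fun_cong[OF eq, of i] by simp
  have len: "length h = length h'" using eqi[of undefined] by (metis length_map)
  show "h = h'"
  proof (rule nth_equalityI[OF len])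
    fix t assume t: "t < length h"
    show "h ! t = h' ! t"
    proof (rule prj_inj)
      fix i
      have "map (prj i) h ! t = map (prj i) h' ! t" using eqi[of i] by simp
      then show "prj i (h ! t) = prj i (h' ! t)" using t len by simp
    qed
  qed
qed

lemma comb_split: "length f = m \<Longrightarrow> comb m (\<lambda>i. map (prj i) f) = f"
  by (auto simp: comb_def intro!: nth_equalityI simp: case_prod_unfold)

lemma comb_inj: "inj_on (comb m) {trs. \<forall>i. length (trs i) = m}"
proof (rule inj_onI)
  fix trs trs' assume A: "trs \<in> {trs. \<forall>i. length (trs i) = m}" "trs' \<in> {trs. \<forall>i. length (trs i) = m}"
    and eq: "comb m trs = comb m trs'"
  show "trs = trs'"
  proof
    fix i
    show "trs i = trs' i"
    proof (rule nth_equalityI)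
      show "length (trs i) = length (trs' i)" using A by simp
      fix t assume t: "t < length (trs i)"
      have "comb m trs ! t = comb m trs' ! t" using eq by simp
      then have "fst (trs i ! t) = fst (trs' i ! t) \<and> snd (trs i ! t) = snd (trs' i ! t)"
        using t A by (simp add: comb_def fun_eq_iff)
      then show "trs i ! t = trs' i ! t" by (simp add: prod_eq_iff)
    qed
  qed
qed

lemma pmf_prodm:
  fixes \<mu> :: "('i::finite,'s,'a) prefix pmf"
  assumes len\<mu>: "\<And>f. f \<in> set_pmf \<mu> \<Longrightarrow> length f = m" and lenf: "length f = m"
  shows "pmf (prodm m \<mu>) f = (\<Prod>i\<in>UNIV. pmf (map_pmf (map (prj i)) \<mu>) (map (prj i) f))"
proof -
  let ?A = "{trs :: 'i \<Rightarrow> ('s \<times> 'a) list. \<forall>i. length (trs i) = m}"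
  have sub: "set_pmf (Pi_pmf UNIV undefined (\<lambda>i. map_pmf (map (prj i)) \<mu>)) \<subseteq> ?A"
    using len\<mu> by (auto simp: set_Pi_pmf PiE_dflt_def) (metis imageE length_map)
  have "pmf (prodm m \<mu>) f = pmf (map_pmf (comb m) (Pi_pmf UNIV undefined (\<lambda>i. map_pmf (map (prj i)) \<mu>))) (comb m (\<lambda>i. map (prj i) f))"
    by (simp add: prodm_def comb_split lenf)
  also have "\<dots> = pmf (Pi_pmf UNIV undefined (\<lambda>i. map_pmf (map (prj i)) \<mu>)) (\<lambda>i. map (prj i) f)"
    by (rule pmf_map_inj_set[OF comb_inj sub]) (simp add: lenf)
  also have "\<dots> = (\<Prod>i\<in>UNIV. pmf (map_pmf (map (prj i)) \<mu>) (map (prj i) f))"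
    by (subst pmf_Pi) auto
  finally show ?thesis .
qed

lemma pmf_bind_app:
  assumes lenW: "\<And>h. h \<in> set_pmf W \<Longrightarrow> length h = k" and finW: "finite (set_pmf W)"
    and lenh: "length h = k"
  shows "pmf (bind_pmf W (\<lambda>h'. map_pmf (\<lambda>r. h' @ r) (Z h'))) (h @ f) = pmf W h * pmf (Z h) f"
proof -
  have eq: "pmf (map_pmf (\<lambda>r. h' @ r) (Z h')) (h @ f) = (if h' = h then pmf (Z h) f else 0)"
    if "h' \<in> set_pmf W" for h'
  proof (cases "h' = h")
    case True
    have "inj (\<lambda>r. h @ r)" by (simp add: inj_def)
    from pmf_map_inj'[OF this, of "Z h" f] show ?thesis using True by simp
  next
    case False
    have "h @ f \<noteq> h' @ r" for r using False lenW[OF that] lenh by (simp add: append_eq_append_conv)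
    then have "h @ f \<notin> (\<lambda>r. h' @ r) ` set_pmf (Z h')" by blast
    then show ?thesis using False by (simp add: pmf_map_outside)
  qed
  have "pmf (bind_pmf W (\<lambda>h'. map_pmf (\<lambda>r. h' @ r) (Z h'))) (h @ f)
      = (\<integral>h'. (if h' = h then pmf (Z h) f else 0) \<partial>measure_pmf W)"
  proof -
    have "AE h' in measure_pmf W. pmf (map_pmf (\<lambda>r. h' @ r) (Z h')) (h @ f) = (if h' = h then pmf (Z h) f else 0)"
      by (simp add: AE_measure_pmf_iff eq)
    then show ?thesis unfolding pmf_bind by (rule integral_cong_AE[rotated 2]) simp_all
  qed
  also have "\<dots> = (\<Sum>h'\<in>set_pmf W. pmf W h' * (if h' = h then pmf (Z h) f else 0))"
    by (rule int_fin_sum[OF finW])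
  also have "\<dots> = pmf W h * pmf (Z h) f"
  proof -
    have "(\<Sum>h'\<in>set_pmf W. pmf W h' * (if h' = h then pmf (Z h) f else 0))
        = (\<Sum>h'\<in>set_pmf W. if h' = h then pmf W h * pmf (Z h) f else 0)"
      by (rule sum.cong) auto
    also have "\<dots> = (if h \<in> set_pmf W then pmf W h * pmf (Z h) f else 0)"
      by (rule sum.delta[OF finW])
    also have "\<dots> = pmf W h * pmf (Z h) f" by (simp add: set_pmf_iff)
    finally show ?thesis .
  qed
  finally show ?thesis .
qed

lemma ent_int: "finite (set_pmf \<mu>) \<Longrightarrow> entropy_pmf \<mu> = - (\<integral>x. ln (pmf \<mu> x) \<partial>measure_pmf \<mu>)"
  by (simp add: entropy_pmf_def int_fin_sum sum_negf)

lemma take_bind_app: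
  assumes lenW: "\<And>h. h \<in> set_pmf W \<Longrightarrow> length h = k"
  shows "map_pmf (take k) (bind_pmf W (\<lambda>h. map_pmf (\<lambda>r. h @ r) (Z h))) = W"
proof -
  have "map_pmf (take k) (bind_pmf W (\<lambda>h. map_pmf (\<lambda>r. h @ r) (Z h)))
      = bind_pmf W (\<lambda>h. map_pmf (\<lambda>r. take k (h @ r)) (Z h))"
    by (simp add: map_bind_pmf pmf.map_comp o_def)
  also have "\<dots> = bind_pmf W (\<lambda>h. return_pmf h)"
  proof (intro bind_pmf_cong refl)
    fix h assume "h \<in> set_pmf W"
    then have "(\<lambda>r. take k (h @ r)) = (\<lambda>r. h)" using lenW by auto
    then show "map_pmf (\<lambda>r. take k (h @ r)) (Z h) = return_pmf h" by simp
  qed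
  finally show ?thesis by (simp add: bind_return_pmf')
qed

lemma GEN:
  fixes W :: "('i::finite,'s,'a) prefix pmf" and P :: "('i,'s,'a) prefix \<Rightarrow> ('i,'s,'a) prefix pmf"
  assumes finW: "finite (set_pmf W)" and lenW: "\<And>h. h \<in> set_pmf W \<Longrightarrow> length h = k"
    and finP: "\<And>h. h \<in> set_pmf W \<Longrightarrow> finite (set_pmf (P h))"
    and lenP: "\<And>h f. h \<in> set_pmf W \<Longrightarrow> f \<in> set_pmf (P h) \<Longrightarrow> length f = m"
    and X_def: "X = bind_pmf W (\<lambda>h. map_pmf (\<lambda>r. h @ r) (P h))"
    and Y_def: "Y = bind_pmf W (\<lambda>h. map_pmf (\<lambda>r. h @ r) (prodm m (P h)))"
  shows "finite (set_pmf X)" "finite (set_pmf Y)" "\<And>x. x \<in> set_pmf X \<Longrightarrow> pmf Y x > 0"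
    "(\<integral>x. ln (pmf X x / pmf Y x) \<partial>measure_pmf X)
       \<le> (\<Sum>i\<in>UNIV. entropy_pmf (map_pmf (map (prj i)) X)) - entropy_pmf X"
proof -
  define Xi where "Xi i = map_pmf (map (prj i)) X" for i
  define Wi where "Wi i = map_pmf (map (prj i)) W" for i
  define Ph where "Ph h i = map_pmf (map (prj i)) (P h)" for h i
  have setX: "set_pmf X = (\<Union>h\<in>set_pmf W. (\<lambda>r. h @ r) ` set_pmf (P h))" by (simp add: X_def)
  show finX: "finite (set_pmf X)" unfolding setX using finW finP by auto
  have finprodm: "finite (set_pmf (prodm m (P h)))" if "h \<in> set_pmf W" for h
  proof -
    have "finite (set_pmf (Pi_pmf UNIV undefined (\<lambda>i. map_pmf (map (prj i)) (P h))))"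
      by (simp add: set_Pi_pmf finP[OF that] finite_PiE_dflt)
    then show ?thesis by (simp add: prodm_def)
  qed
  show finY: "finite (set_pmf Y)" unfolding Y_def using finW finprodm by auto
  have finXi: "finite (set_pmf (Xi i))" for i using finX by (simp add: Xi_def)
  have finPh: "h \<in> set_pmf W \<Longrightarrow> finite (set_pmf (Ph h i))" for h i using finP by (simp add: Ph_def)
  have pX: "pmf X (h @ f) = pmf W h * pmf (P h) f" if "h \<in> set_pmf W" for h f
    unfolding X_def by (rule pmf_bind_app[OF lenW finW lenW[OF that]])
  have pY: "pmf Y (h @ f) = pmf W h * (\<Prod>i\<in>UNIV. pmf (Ph h i) (map (prj i) f))"
    if h: "h \<in> set_pmf W" and f: "f \<in> set_pmf (P h)" for h f
    unfolding Y_def Ph_def using pmf_prodm[OF lenP[OF h] lenP[OF h f]]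
    by (simp add: pmf_bind_app[OF lenW finW lenW[OF h]])
  have posW: "h \<in> set_pmf W \<Longrightarrow> pmf W h > 0" for h by (simp add: pmf_positive)
  have posP: "h \<in> set_pmf W \<Longrightarrow> f \<in> set_pmf (P h) \<Longrightarrow> pmf (P h) f > 0" for h f by (simp add: pmf_positive)
  have posPh: "pmf (Ph h i) (map (prj i) f) > 0" if h: "h \<in> set_pmf W" and f: "f \<in> set_pmf (P h)" for h f i
    using pmf_map_ge[where g="map (prj i)" and M="P h" and x=f] posP[OF h f] unfolding Ph_def by linarith
  have posX: "pmf X (h @ f) > 0" if h: "h \<in> set_pmf W" and f: "f \<in> set_pmf (P h)" for h f
    using pX[OF h] posW[OF h] posP[OF h f] by simp
  have posY: "pmf Y (h @ f) > 0" if h: "h \<in> set_pmf W" and f: "f \<in> set_pmf (P h)" for h f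
    using pY[OF h f] posW[OF h] posPh[OF h f] by (simp add: prod_pos)
  show posYx: "\<And>x. x \<in> set_pmf X \<Longrightarrow> pmf Y x > 0" unfolding setX using posY by auto
  have posXi: "pmf (Xi i) (map (prj i) h @ map (prj i) f) > 0" if h: "h \<in> set_pmf W" and f: "f \<in> set_pmf (P h)" for h f i
    using pmf_map_ge[where g="map (prj i)" and M=X and x="h @ f"] posX[OF h f] unfolding Xi_def by simp
  have posWi: "pmf (Wi i) (map (prj i) h) > 0" if h: "h \<in> set_pmf W" for h i
    using pmf_map_ge[where g="map (prj i)" and M=W and x=h] posW[OF h] unfolding Wi_def by linarith

  define c where "c h = (\<Prod>i\<in>UNIV. pmf (Wi i) (map (prj i) h))" for h
  define C where "C h i v = pmf (Xi i) (map (prj i) h @ v) / pmf (Wi i) (map (prj i) h)" for h i v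
  define \<Phi> where "\<Phi> x = (\<Sum>i\<in>UNIV. ln (pmf (Xi i) (map (prj i) x))) - ln (pmf Y x)" for x
  have mapW: "map_pmf (take k) X = W" unfolding X_def by (rule take_bind_app[OF lenW])
  have KEY: "(\<Sum>v\<in>V. pmf (Xi i) (u @ v)) \<le> pmf (Wi i) u" if finV: "finite V" and lu: "length u = k" for V u i
  proof -
    have "(\<Sum>v\<in>V. pmf (Xi i) (u @ v)) = (\<Sum>y\<in>(\<lambda>v. u @ v) ` V. pmf (Xi i) y)"
      by (subst sum.reindex) (auto simp: inj_on_def)
    also have "\<dots> = measure_pmf.prob (Xi i) ((\<lambda>v. u @ v) ` V)"
      using finV by (simp add: measure_measure_pmf_finite)
    also have "\<dots> \<le> measure_pmf.prob (Xi i) {y. take k y = u}"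
      using lu by (intro measure_pmf.finite_measure_mono) auto
    also have "\<dots> = measure_pmf.prob X (take k -` {h'. map (prj i) h' = u})"
      unfolding Xi_def measure_map_pmf by (rule arg_cong[where f="measure_pmf.prob X"]) (auto simp: take_map)
    also have "\<dots> = measure_pmf.prob W {h'. map (prj i) h' = u}"
      by (subst mapW[symmetric]) (simp del: measure_map_pmf add: measure_map_pmf)
    also have "\<dots> = pmf (Wi i) u" by (simp add: Wi_def pmf_map vimage_def)
    finally show ?thesis .
  qed
  have gibW: "(\<integral>h. ln (c h / pmf W h) \<partial>measure_pmf W) \<le> 0"
  proof (rule gibbs[OF finW])
    show "\<And>h. h \<in> set_pmf W \<Longrightarrow> 0 < c h" unfolding c_def using posWi by (simp add: prod_pos)
    let ?\<Pi> = "Pi_pmf UNIV undefined Wi"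
    let ?sp = "\<lambda>(h :: ('i,'s,'a) prefix) i. map (prj i) h"
    have ch: "c h = pmf ?\<Pi> (?sp h)" for h unfolding c_def by (subst pmf_Pi) auto
    have "(\<Sum>h\<in>set_pmf W. c h) = (\<Sum>y\<in>?sp ` set_pmf W. pmf ?\<Pi> y)"
      unfolding ch by (subst sum.reindex) (auto intro: inj_on_subset[OF split_inj])
    also have "\<dots> = measure_pmf.prob ?\<Pi> (?sp ` set_pmf W)"
      using finW by (simp add: measure_measure_pmf_finite)
    also have "\<dots> \<le> 1" by simp
    finally show "(\<Sum>h\<in>set_pmf W. c h) \<le> 1" .
  qed
  have gibP: "(\<integral>v. ln (C h i v / pmf (Ph h i) v) \<partial>measure_pmf (Ph h i)) \<le> 0" if h: "h \<in> set_pmf W" for h i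
  proof (rule gibbs[OF finPh[OF h]])
    show "\<And>v. v \<in> set_pmf (Ph h i) \<Longrightarrow> 0 < C h i v"
      unfolding Ph_def C_def using posXi[OF h] posWi[OF h] by auto
    have "(\<Sum>v\<in>set_pmf (Ph h i). C h i v) = (\<Sum>v\<in>set_pmf (Ph h i). pmf (Xi i) (map (prj i) h @ v)) / pmf (Wi i) (map (prj i) h)"
      unfolding C_def by (simp add: sum_divide_distrib)
    also have "\<dots> \<le> 1"
      using KEY[OF finPh[OF h], of "map (prj i) h" i] posWi[OF h, of i] lenW[OF h] by simp
    finally show "(\<Sum>v\<in>set_pmf (Ph h i). C h i v) \<le> 1" .
  qed
  have pw: "\<Phi> (h @ f) = ln (c h / pmf W h) + (\<Sum>i\<in>UNIV. ln (C h i (map (prj i) f) / pmf (Ph h i) (map (prj i) f)))"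
    if h: "h \<in> set_pmf W" and f: "f \<in> set_pmf (P h)" for h f
  proof -
    have lY: "ln (pmf Y (h @ f)) = ln (pmf W h) + (\<Sum>i\<in>UNIV. ln (pmf (Ph h i) (map (prj i) f)))"
    proof -
      have nz: "\<not> (\<exists>a. pmf (Ph h a) (map (prj a) f) = 0)"
        using order_less_imp_not_eq2[OF posPh[OF h f]] by blast
      show ?thesis using pY[OF h f] posW[OF h] posPh[OF h f] nz by (simp add: ln_mult prod_pos ln_prod)
    qed
    have lc: "ln (c h / pmf W h) = (\<Sum>i\<in>UNIV. ln (pmf (Wi i) (map (prj i) h))) - ln (pmf W h)"
    proof -
      have nz: "\<not> (\<exists>a. pmf (Wi a) (map (prj a) h) = 0)"
        using order_less_imp_not_eq2[OF posWi[OF h]] by blast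
      show ?thesis unfolding c_def using posWi[OF h] posW[OF h] nz by (simp add: ln_div prod_pos ln_prod)
    qed
    have lC: "ln (C h i (map (prj i) f) / pmf (Ph h i) (map (prj i) f)) =
       ln (pmf (Xi i) (map (prj i) (h @ f))) - ln (pmf (Wi i) (map (prj i) h)) - ln (pmf (Ph h i) (map (prj i) f))" for i
      unfolding C_def using posXi[OF h f, of i] posWi[OF h, of i] posPh[OF h f, of i] by (simp add: ln_div ln_mult)
    show ?thesis unfolding \<Phi>_def lY lc lC by (simp add: sum_subtractf)
  qed
  have inner: "(\<integral>f. \<Phi> (h @ f) \<partial>measure_pmf (P h)) \<le> ln (c h / pmf W h)" if h: "h \<in> set_pmf W" for h
  proof -
    define \<psi> where "\<psi> i f = ln (C h i (map (prj i) f) / pmf (Ph h i) (map (prj i) f))" for i f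
    have intP: "integrable (measure_pmf (P h)) g" for g :: "_ \<Rightarrow> real"
      by (rule integrable_measure_pmf_finite[OF finP[OF h]])
    have "(\<integral>f. \<Phi> (h @ f) \<partial>measure_pmf (P h)) = (\<integral>f. ln (c h / pmf W h) + (\<Sum>i\<in>UNIV. \<psi> i f) \<partial>measure_pmf (P h))"
      by (rule integral_cong_AE[rotated 2]) (simp_all add: AE_measure_pmf_iff pw[OF h] \<psi>_def)
    also have "\<dots> = ln (c h / pmf W h) + (\<Sum>i\<in>UNIV. (\<integral>f. \<psi> i f \<partial>measure_pmf (P h)))"
      by (simp add: intP integral_sum)
    also have "\<dots> \<le> ln (c h / pmf W h)"
    proof -
      have each: "(\<integral>f. \<psi> i f \<partial>measure_pmf (P h)) \<le> 0" for i
      proof -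
        have "(\<integral>f. \<psi> i f \<partial>measure_pmf (P h)) = (\<integral>v. ln (C h i v / pmf (Ph h i) v) \<partial>measure_pmf (Ph h i))"
          by (simp add: \<psi>_def Ph_def)
        then show ?thesis using gibP[OF h, of i] by simp
      qed
      have "(\<Sum>i\<in>UNIV. (\<integral>f. \<psi> i f \<partial>measure_pmf (P h))) \<le> 0"
        by (rule sum_nonpos) (use each in auto)
      then show ?thesis by simp
    qed
    finally show ?thesis .
  qed
  have LX: "(\<integral>x. \<Phi> x \<partial>measure_pmf X) \<le> 0"
  proof -
    have "(\<integral>x. \<Phi> x \<partial>measure_pmf X) = (\<integral>h. (\<integral>f. \<Phi> (h @ f) \<partial>measure_pmf (P h)) \<partial>measure_pmf W)"
      using finX unfolding X_def by (simp add: int_bind_fin)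
    also have "\<dots> = (\<Sum>h\<in>set_pmf W. pmf W h * (\<integral>f. \<Phi> (h @ f) \<partial>measure_pmf (P h)))"
      by (rule int_fin_sum[OF finW])
    also have "\<dots> \<le> (\<Sum>h\<in>set_pmf W. pmf W h * ln (c h / pmf W h))"
      by (intro sum_mono mult_left_mono inner) auto
    also have "\<dots> = (\<integral>h. ln (c h / pmf W h) \<partial>measure_pmf W)"
      by (rule int_fin_sum[OF finW, symmetric])
    also have "\<dots> \<le> 0" by (rule gibW)
    finally show ?thesis .
  qed
  have intX: "integrable (measure_pmf X) g" for g :: "_ \<Rightarrow> real"
    by (rule integrable_measure_pmf_finite[OF finX])
  have "(\<integral>x. ln (pmf X x / pmf Y x) \<partial>measure_pmf X) = (\<integral>x. ln (pmf X x) - ln (pmf Y x) \<partial>measure_pmf X)"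
  proof (rule integral_cong_AE[rotated 2])
    show "AE x in measure_pmf X. ln (pmf X x / pmf Y x) = ln (pmf X x) - ln (pmf Y x)"
    proof (unfold AE_measure_pmf_iff, intro ballI)
      fix x assume x: "x \<in> set_pmf X"
      have "pmf X x > 0" using x by (simp add: pmf_positive)
      then show "ln (pmf X x / pmf Y x) = ln (pmf X x) - ln (pmf Y x)" using posYx[OF x] by (simp add: ln_div)
    qed
  qed simp_all
  also have "\<dots> = (\<integral>x. ln (pmf X x) \<partial>measure_pmf X) - (\<integral>x. ln (pmf Y x) \<partial>measure_pmf X)"
    by (simp add: intX)
  finally have KLeq: "(\<integral>x. ln (pmf X x / pmf Y x) \<partial>measure_pmf X) =
     (\<integral>x. ln (pmf X x) \<partial>measure_pmf X) - (\<integral>x. ln (pmf Y x) \<partial>measure_pmf X)" .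
  have Heq: "(\<Sum>i\<in>UNIV. entropy_pmf (map_pmf (map (prj i)) X)) - entropy_pmf X =
     - (\<Sum>i\<in>UNIV. (\<integral>x. ln (pmf (Xi i) (map (prj i) x)) \<partial>measure_pmf X)) + (\<integral>x. ln (pmf X x) \<partial>measure_pmf X)"
    using finXi finX by (simp add: ent_int Xi_def sum_negf)
  have "(\<integral>x. \<Phi> x \<partial>measure_pmf X) =
     (\<Sum>i\<in>UNIV. (\<integral>x. ln (pmf (Xi i) (map (prj i) x)) \<partial>measure_pmf X)) - (\<integral>x. ln (pmf Y x) \<partial>measure_pmf X)"
    unfolding \<Phi>_def by (simp add: intX integral_sum)
  then show "(\<integral>x. ln (pmf X x / pmf Y x) \<partial>measure_pmf X)
       \<le> (\<Sum>i\<in>UNIV. entropy_pmf (map_pmf (map (prj i)) X)) - entropy_pmf X"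
    using LX KLeq Heq by linarith
qed

lemma KL_nonneg:
  assumes fin: "finite (set_pmf P)" and pos: "\<And>x. x \<in> set_pmf P \<Longrightarrow> pmf Q x > 0"
  shows "(\<integral>x. ln (pmf P x / pmf Q x) \<partial>measure_pmf P) \<ge> 0"
proof -
  have "(\<integral>x. ln (pmf Q x / pmf P x) \<partial>measure_pmf P) \<le> 0"
  proof (rule gibbs[OF fin pos])
    have "(\<Sum>x\<in>set_pmf P. pmf Q x) = measure_pmf.prob Q (set_pmf P)"
      using fin by (simp add: measure_measure_pmf_finite)
    then show "(\<Sum>x\<in>set_pmf P. pmf Q x) \<le> 1" by simp
  qed
  moreover have "(\<integral>x. ln (pmf Q x / pmf P x) \<partial>measure_pmf P) = - (\<integral>x. ln (pmf P x / pmf Q x) \<partial>measure_pmf P)"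
  proof -
    have "(\<integral>x. ln (pmf Q x / pmf P x) \<partial>measure_pmf P) = (\<integral>x. - ln (pmf P x / pmf Q x) \<partial>measure_pmf P)"
    proof (rule integral_cong_AE[rotated 2])
      show "AE x in measure_pmf P. ln (pmf Q x / pmf P x) = - ln (pmf P x / pmf Q x)"
      proof (unfold AE_measure_pmf_iff, intro ballI)
        fix x assume x: "x \<in> set_pmf P"
        have "pmf P x > 0" using x by (simp add: pmf_positive)
        then show "ln (pmf Q x / pmf P x) = - ln (pmf P x / pmf Q x)" using pos[OF x] by (simp add: ln_div)
      qed
    qed simp_all
    then show ?thesis by simp
  qed
  ultimately show ?thesis by simp
qed

locale game =
  fixes Sl :: "'i::finite \<Rightarrow> 's set" and Al :: "'i \<Rightarrow> 'a set"
    and T :: "'i \<Rightarrow> 's \<Rightarrow> 'a \<Rightarrow> 's pmf" and pol :: "('i \<Rightarrow> 's) \<Rightarrow> ('i \<Rightarrow> 'a) pmf"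
  assumes finS: "\<And>i. finite (Sl i)" and finA: "\<And>i. finite (Al i)"
    and trans: "\<And>i s a. s \<in> Sl i \<Longrightarrow> a \<in> Al i \<Longrightarrow> set_pmf (T i s a) \<subseteq> Sl i"
    and policy: "\<And>s. (\<forall>i. s i \<in> Sl i) \<Longrightarrow> set_pmf (pol s) \<subseteq> {a. \<forall>i. a i \<in> Al i}"
begin

definition "GS = {s. \<forall>i. s i \<in> Sl i}"
definition "GA = {a. \<forall>i. a i \<in> Al i}"
abbreviation "F \<equiv> full_prefix T pol"

lemma fin_GS: "finite GS"
proof -
  have "GS = PiE UNIV Sl" by (auto simp: GS_def PiE_def extensional_def)
  then show ?thesis by (simp add: finite_PiE finS)
qed

lemma fin_GA: "finite GA"
proof -
  have "GA = PiE UNIV Al" by (auto simp: GA_def PiE_def extensional_def)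
  then show ?thesis by (simp add: finite_PiE finA)
qed

lemma pol_set: "s \<in> GS \<Longrightarrow> set_pmf (pol s) \<subseteq> GA"
  using policy by (simp add: GS_def GA_def)

lemma step_set: "s \<in> GS \<Longrightarrow> a \<in> GA \<Longrightarrow> set_pmf (joint_step T s a) \<subseteq> GS"
proof
  fix x assume s: "s \<in> GS" and a: "a \<in> GA" and x: "x \<in> set_pmf (joint_step T s a)"
  have "x i \<in> set_pmf (T i (s i) (a i))" for i using x by (simp add: joint_step_def set_Pi_pmf PiE_dflt_def)
  moreover have "set_pmf (T i (s i) (a i)) \<subseteq> Sl i" for i using s a trans by (simp add: GS_def GA_def)
  ultimately show "x \<in> GS" by (auto simp: GS_def)
qed

definition "GL n = {xs. set xs \<subseteq> GS \<times> GA \<and> length xs = n}"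

lemma fin_GL: "finite (GL n)"
  unfolding GL_def by (rule finite_lists_length_eq) (simp add: fin_GS fin_GA)

lemma F_set: "s \<in> GS \<Longrightarrow> set_pmf (F n s) \<subseteq> GL n"
proof (induction n arbitrary: s)
  case 0
  then show ?case by (simp add: GL_def)
next
  case (Suc n)
  show ?case
  proof
    fix x assume "x \<in> set_pmf (F (Suc n) s)"
    then obtain a s' rest where a: "a \<in> set_pmf (pol s)" and s': "s' \<in> set_pmf (joint_step T s a)"
      and r: "rest \<in> set_pmf (F n s')" and x: "x = (s, a) # rest" by auto
    have aG: "a \<in> GA" using pol_set[OF Suc.prems] a by auto
    have "s' \<in> GS" using step_set[OF Suc.prems aG] s' by auto
    then have "rest \<in> GL n" using Suc.IH r by auto
    then show "x \<in> GL (Suc n)" using x Suc.prems aG by (auto simp: GL_def)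
  qed
qed

lemma F_fin: "s \<in> GS \<Longrightarrow> finite (set_pmf (F n s))"
  by (rule finite_subset[OF F_set fin_GL])

lemma Pd_set: "sa \<in> GS \<times> GA \<Longrightarrow> set_pmf (Pd T pol m sa) \<subseteq> GL m"
proof
  fix x assume sa: "sa \<in> GS \<times> GA" and x: "x \<in> set_pmf (Pd T pol m sa)"
  then obtain s' where s': "s' \<in> set_pmf (joint_step T (fst sa) (snd sa))" and xs: "x \<in> set_pmf (F m s')"
    unfolding Pd_def by (metis UN_E set_bind_pmf)
  have "s' \<in> GS" using step_set[of "fst sa" "snd sa"] sa s' by auto
  then show "x \<in> GL m" using F_set xs by auto
qed

lemma Pd_fin: "sa \<in> GS \<times> GA \<Longrightarrow> finite (set_pmf (Pd T pol m sa))"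
  by (rule finite_subset[OF Pd_set fin_GL])

abbreviation "tc sI n \<equiv> tc_prefix T pol sI n"

lemma tc_eq: "tc sI n = (\<Sum>i\<in>UNIV. entropy_pmf (map_pmf (map (prj i)) (F n sI))) - entropy_pmf (F n sI)"
  by (simp add: tc_prefix_def)

lemma BH_gen:
  assumes sI: "sI \<in> GS"
    and W: "finite (set_pmf W)" "\<And>h. h \<in> set_pmf W \<Longrightarrow> length h = k"
    and P: "\<And>h. h \<in> set_pmf W \<Longrightarrow> finite (set_pmf (P h))"
      "\<And>h f. h \<in> set_pmf W \<Longrightarrow> f \<in> set_pmf (P h) \<Longrightarrow> length f = m"
    and X: "F n sI = bind_pmf W (\<lambda>h. map_pmf (\<lambda>r. h @ r) (P h))"
    and Y: "Y = bind_pmf W (\<lambda>h. map_pmf (\<lambda>r. h @ r) (prodm m (P h)))"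
  shows "measure_pmf.prob (F n sI) E - measure_pmf.prob Y E \<le> sqrt (1 - exp (- tc sI n))"
    and "tc sI n \<ge> 0"
proof -
  note G = GEN[OF W P X Y]
  define KL where "KL = (\<integral>x. ln (pmf (F n sI) x / pmf Y x) \<partial>measure_pmf (F n sI))"
  have KLtc: "KL \<le> tc sI n" unfolding KL_def tc_eq by (rule G(4))
  have "measure_pmf.prob (F n sI) E - measure_pmf.prob Y E \<le> sqrt (1 - exp (- KL))"
    unfolding KL_def by (rule BH[OF G(1) G(2) G(3)])
  also have "\<dots> \<le> sqrt (1 - exp (- tc sI n))" using KLtc by simp
  finally show "measure_pmf.prob (F n sI) E - measure_pmf.prob Y E \<le> sqrt (1 - exp (- tc sI n))" .
  have "KL \<ge> 0" unfolding KL_def by (rule KL_nonneg[OF G(1) G(3)])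
  then show "tc sI n \<ge> 0" using KLtc by simp
qed

end

context game begin

lemma img0_eq: "indep_phase T pol n (\<lambda>i. sI) = prodm n (F n sI)"
  by (simp add: indep_phase_comb prodm_def agent_run_marg)

lemma inst0:
  assumes sI: "sI \<in> GS"
  shows "measure_pmf.prob (F n sI) E - measure_pmf.prob (img_prefix T pol sI (Some 0) n) E \<le> sqrt (1 - exp (- tc sI n))"
    and "tc sI n \<ge> 0"
proof -
  have X: "F n sI = bind_pmf (return_pmf []) (\<lambda>h. map_pmf (\<lambda>r. h @ r) (F n sI))"
    unfolding bind_return_pmf append_Nil by (simp add: map_pmf_ident)
  have Y: "img_prefix T pol sI (Some 0) n = bind_pmf (return_pmf []) (\<lambda>h. map_pmf (\<lambda>r. h @ r) (prodm n (F n sI)))"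
    unfolding bind_return_pmf append_Nil by (simp add: img_prefix_def img0_eq map_pmf_ident)
  note B = BH_gen[where W="return_pmf []" and k=0 and P="\<lambda>h. F n sI" and m=n, OF sI _ _ _ _ X Y]
  show "measure_pmf.prob (F n sI) E - measure_pmf.prob (img_prefix T pol sI (Some 0) n) E \<le> sqrt (1 - exp (- tc sI n))"
    by (rule B(1)) (auto simp: F_fin[OF sI] F_len)
  show "tc sI n \<ge> 0"
    by (rule B(2)) (auto simp: F_fin[OF sI] F_len)
qed

lemma instS:
  assumes sI: "sI \<in> GS" and n: "n = Suc k + m"
  shows "measure_pmf.prob (F n sI) E - measure_pmf.prob (img_prefix T pol sI (Some (Suc k)) n) E \<le> sqrt (1 - exp (- tc sI n))"
proof -
  have X: "F n sI = bind_pmf (F (Suc k) sI) (\<lambda>h. map_pmf (\<lambda>r. h @ r) (Pd T pol m (last h)))"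
    unfolding n by (rule FD)
  have Y: "img_prefix T pol sI (Some (Suc k)) n = bind_pmf (F (Suc k) sI) (\<lambda>h. map_pmf (\<lambda>r. h @ r) (prodm m (Pd T pol m (last h))))"
    unfolding n img_prefix_def by (simp only: option.case nat.case LD Qd_prodm)
  have lastG: "last h \<in> GS \<times> GA" if "h \<in> set_pmf (F (Suc k) sI)" for h
  proof -
    have "h \<in> GL (Suc k)" using F_set[OF sI, of "Suc k"] that by (rule subsetD)
    then have "h \<noteq> []" "set h \<subseteq> GS \<times> GA" by (auto simp: GL_def)
    then show ?thesis using last_in_set by blast
  qed
  show ?thesis
  proof (rule BH_gen(1)[OF sI _ _ _ _ X Y])
    show "finite (set_pmf (F (Suc k) sI))" by (rule F_fin[OF sI])
    show "\<And>h. h \<in> set_pmf (F (Suc k) sI) \<Longrightarrow> length h = Suc k" by (rule F_len)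
    show "\<And>h. h \<in> set_pmf (F (Suc k) sI) \<Longrightarrow> finite (set_pmf (Pd T pol m (last h)))"
      by (rule Pd_fin[OF lastG])
    show "\<And>h f. h \<in> set_pmf (F (Suc k) sI) \<Longrightarrow> f \<in> set_pmf (Pd T pol m (last h)) \<Longrightarrow> length f = m"
    proof -
      fix h f assume h: "h \<in> set_pmf (F (Suc k) sI)" and f: "f \<in> set_pmf (Pd T pol m (last h))"
      have "f \<in> GL m" using Pd_set[OF lastG[OF h]] f by (rule subsetD)
      then show "length f = m" by (simp add: GL_def)
    qed
  qed
qed

lemma P1:
  assumes sI: "sI \<in> GS"
  shows "measure_pmf.prob (F n sI) E - measure_pmf.prob (img_prefix T pol sI L n) E \<le> sqrt (1 - exp (- tc sI n))"
proof -
  have sq0: "sqrt (1 - exp (- tc sI n)) \<ge> 0" using inst0(2)[OF sI, of n] by simp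
  show ?thesis
  proof (cases L)
    case None
    then show ?thesis using sq0 by (simp add: img_prefix_def)
  next
    case (Some t)
    show ?thesis
    proof (cases t)
      case 0
      then show ?thesis using Some inst0(1)[OF sI] by simp
    next
      case (Suc k)
      show ?thesis
      proof (cases "n \<le> Suc k")
        case True
        then show ?thesis using Some Suc sq0 by (simp add: img_prefix_def LE)
      next
        case False
        define m where "m = n - Suc k"
        have "n = Suc k + m" using False by (simp add: m_def)
        then show ?thesis using Some Suc instS[OF sI] by simp
      qed
    qed
  qed
qed

lemma P1mix:
  assumes sI: "sI \<in> GS"
  shows "measure_pmf.prob (img_geo_prefix T pol sI p n) E \<ge> measure_pmf.prob (F n sI) E - sqrt (1 - exp (- tc sI n))"
proof -
  define c where "c = measure_pmf.prob (F n sI) E - sqrt (1 - exp (- tc sI n))"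
  show ?thesis
  proof (cases "c \<le> 0")
    case True
    have "measure_pmf.prob (img_geo_prefix T pol sI p n) E \<ge> 0" by simp
    then show ?thesis using True unfolding c_def by linarith
  next
    case False
    have "ennreal c = (\<integral>\<^sup>+L. ennreal c \<partial>measure_pmf (loss_dist p))" by simp
    also have "\<dots> \<le> (\<integral>\<^sup>+L. emeasure (measure_pmf (img_prefix T pol sI L n)) E \<partial>measure_pmf (loss_dist p))"
    proof (intro nn_integral_mono)
      fix L
      have "c \<le> measure_pmf.prob (img_prefix T pol sI L n) E" using P1[OF sI, of n E L] unfolding c_def by simp
      then show "ennreal c \<le> emeasure (measure_pmf (img_prefix T pol sI L n)) E"
        by (simp add: measure_pmf.emeasure_eq_measure)
    qed
    also have "\<dots> = emeasure (measure_pmf (img_geo_prefix T pol sI p n)) E"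
      by (simp add: img_geo_prefix_def)
    also have "\<dots> = ennreal (measure_pmf.prob (img_geo_prefix T pol sI p n) E)"
      by (simp add: measure_pmf.emeasure_eq_measure)
    finally show ?thesis using False unfolding c_def by (simp add: ennreal_le_iff)
  qed
qed

end

definition st :: "nat \<Rightarrow> ('i,'s,'a) prefix \<Rightarrow> ('i \<Rightarrow> 's) list" where
  "st j xs = take j (map fst xs)"

lemma F_first: "x \<in> set_pmf (full_prefix T pol (Suc n) s) \<Longrightarrow> fst (x ! 0) = s"
  by auto

lemma comb_len: "length (comb m trs) = m" by (simp add: comb_def)

lemma IP_first:
  assumes "x \<in> set_pmf (indep_phase T pol (Suc n) B)"
  shows "fst (x ! 0) = (\<lambda>i. B i i)"
proof -
  from assms obtain trs where trs: "trs \<in> set_pmf (Pi_pmf UNIV undefined (\<lambda>i. agent_run T pol i (Suc n) (B i)))"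
    and x: "x = comb (Suc n) trs" by (auto simp: indep_phase_comb)
  have "trs i \<in> set_pmf (agent_run T pol i (Suc n) (B i))" for i
    using trs by (simp add: set_Pi_pmf PiE_dflt_def)
  then have "fst (trs i ! 0) = B i i" for i proof - show ?thesis using \<open>\<And>i. trs i \<in> _\<close>[of i] by auto qed
  then show ?thesis using x by (simp add: comb_def fun_eq_iff del: upt_Suc)
qed

lemma IP_len: "x \<in> set_pmf (indep_phase T pol n B) \<Longrightarrow> length x = n"
  by (auto simp: indep_phase_comb comb_len)

lemma st1_F: "map_pmf (st (Suc 0)) (full_prefix T pol n s) = return_pmf (if n = 0 then [] else [s])"
proof (cases n)
  case 0 then show ?thesis by (simp add: st_def)
next
  case (Suc n')
  have "map_pmf (st (Suc 0)) (full_prefix T pol n s) = map_pmf (\<lambda>_. [s]) (full_prefix T pol n s)"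
  proof (rule map_pmf_cong[OF refl])
    fix x assume x: "x \<in> set_pmf (full_prefix T pol n s)"
    then have "length x = Suc n'" using Suc F_len by blast
    then obtain y ys where "x = y # ys" by (cases x) auto
    then show "st (Suc 0) x = [s]" using F_first x Suc by (fastforce simp: st_def)
  qed
  then show ?thesis using Suc by simp
qed

lemma st1_IP: "map_pmf (st (Suc 0)) (indep_phase T pol n B) = return_pmf (if n = 0 then [] else [(\<lambda>i. B i i)])"
proof (cases n)
  case 0 then show ?thesis by (simp add: st_def indep_phase_0)
next
  case (Suc n')
  have "map_pmf (st (Suc 0)) (indep_phase T pol n B) = map_pmf (\<lambda>_. [(\<lambda>i. B i i)]) (indep_phase T pol n B)"
  proof (rule map_pmf_cong[OF refl])
    fix x assume x: "x \<in> set_pmf (indep_phase T pol n B)"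
    then have "length x = Suc n'" using Suc IP_len by blast
    then obtain y ys where "x = y # ys" by (cases x) auto
    then show "st (Suc 0) x = [(\<lambda>i. B i i)]" using IP_first x Suc by (fastforce simp: st_def)
  qed
  then show ?thesis using Suc by simp
qed

lemma st_cons: "st (Suc j) ((s, a) # rest) = s # st j rest"
  by (simp add: st_def)

lemma LSHAPE: "map_pmf (st (Suc j)) (bind_pmf (pol s) (\<lambda>a. bind_pmf (joint_step T s a) (\<lambda>s'.
     bind_pmf (R a s') (\<lambda>rest. return_pmf ((s, a) # rest))))) =
   bind_pmf (pol s) (\<lambda>a. bind_pmf (joint_step T s a) (\<lambda>s'. map_pmf ((#) s) (map_pmf (st j) (R a s'))))"
  by (simp add: map_bind_pmf st_cons pmf.map_comp o_def map_pmf_def[symmetric])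

lemma AG: "map_pmf (st (Suc (Suc k))) (loss_prefix T pol k n s) = map_pmf (st (Suc (Suc k))) (full_prefix T pol n s)"
proof (induction k arbitrary: n s)
  case 0
  show ?case
  proof (cases n)
    case 0 then show ?thesis by simp
  next
    case (Suc n')
    have inner: "map_pmf (st (Suc 0)) (bind_pmf (Pi_pmf UNIV undefined (\<lambda>i. joint_step T s a))
            (\<lambda>imag. indep_phase T pol n' (\<lambda>i. (imag i)(i := s' i)))) = map_pmf (st (Suc 0)) (full_prefix T pol n' s')" for a s'
      by (simp add: map_bind_pmf st1_IP st1_F)
    show ?thesis unfolding Suc loss_prefix.simps full_prefix.simps nat.case
      by (subst LSHAPE, subst LSHAPE, simp only: inner)
  qed
next
  case (Suc k)
  show ?case
  proof (cases n)
    case 0 then show ?thesis by simp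
  next
    case (Suc n')
    show ?thesis unfolding Suc loss_prefix.simps full_prefix.simps nat.case
      by (subst LSHAPE, subst LSHAPE, simp only: Suc.IH)
  qed
qed

definition wit where "wit ST SA (x :: ('i,'s,'a) prefix) M \<longleftrightarrow>
   M < length x \<and> fst (x ! M) \<in> ST \<and> (\<forall>j<M. fst (x ! j) \<notin> SA)"
definition mwit where "mwit ST SA x = (LEAST M. wit ST SA x M)"
definition succ_le where "succ_le ST SA t x \<longleftrightarrow> (\<exists>M. wit ST SA x M \<and> M \<le> t)"

lemma succ_wit: "succ_prefix ST SA x \<longleftrightarrow> (\<exists>M. wit ST SA x M)"
  by (auto simp: succ_prefix_def wit_def)

lemma mwit_wit: "succ_prefix ST SA x \<Longrightarrow> wit ST SA x (mwit ST SA x)"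
  unfolding succ_wit mwit_def by (rule LeastI_ex)

lemma mwit_le: "wit ST SA x M \<Longrightarrow> mwit ST SA x \<le> M"
  unfolding mwit_def by (rule Least_le)

lemma succ_le_iff: "succ_le ST SA t x \<longleftrightarrow> succ_prefix ST SA x \<and> mwit ST SA x \<le> t"
proof
  assume "succ_le ST SA t x"
  then obtain M where M: "wit ST SA x M" "M \<le> t" by (auto simp: succ_le_def)
  then show "succ_prefix ST SA x \<and> mwit ST SA x \<le> t"
    using mwit_le[OF M(1)] by (auto simp: succ_wit)
next
  assume "succ_prefix ST SA x \<and> mwit ST SA x \<le> t"
  then show "succ_le ST SA t x" using mwit_wit by (auto simp: succ_le_def)
qed

definition Phi where "Phi ST SA (ys :: ('i \<Rightarrow> 's) list) \<longleftrightarrow> (\<exists>M<length ys. ys ! M \<in> ST \<and> (\<forall>j<M. ys ! j \<notin> SA))"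

lemma succ_le_st: "succ_le ST SA t x \<longleftrightarrow> Phi ST SA (st (Suc t) x)"
proof
  assume "succ_le ST SA t x"
  then obtain M where M: "wit ST SA x M" "M \<le> t" by (auto simp: succ_le_def)
  then show "Phi ST SA (st (Suc t) x)" unfolding Phi_def wit_def st_def
    by (intro exI[of _ M]) auto
next
  assume "Phi ST SA (st (Suc t) x)"
  then obtain M where M: "M < length (st (Suc t) x)" "st (Suc t) x ! M \<in> ST" "\<forall>j<M. st (Suc t) x ! j \<notin> SA"
    unfolding Phi_def by blast
  have Mt: "M \<le> t" "M < length x" using M(1) by (auto simp: st_def)
  have "fst (x ! j) \<notin> SA" if "j < M" for j using M(3) that Mt by (auto simp: st_def)
  then have "wit ST SA x M" using M(2) Mt by (auto simp: wit_def st_def)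
  then show "succ_le ST SA t x" using Mt by (auto simp: succ_le_def)
qed

lemma measure_bind_real:
  "measure_pmf.prob (bind_pmf M N) X = (\<integral>x. measure_pmf.prob (N x) X \<partial>measure_pmf M)"
proof -
  have int: "integrable (measure_pmf M) (\<lambda>x. measure_pmf.prob (N x) X)"
    by (rule measure_pmf.integrable_const_bound[where B=1]) auto
  have "emeasure (measure_pmf (bind_pmf M N)) X = (\<integral>\<^sup>+x. ennreal (measure_pmf.prob (N x) X) \<partial>measure_pmf M)"
    unfolding emeasure_bind_pmf by (simp add: measure_pmf.emeasure_eq_measure)
  also have "\<dots> = ennreal (\<integral>x. measure_pmf.prob (N x) X \<partial>measure_pmf M)"
    by (rule nn_integral_eq_integral[OF int]) auto
  finally show ?thesis
    by (simp add: measure_pmf.emeasure_eq_measure integral_nonneg_AE)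
qed

lemma geo_tail:
  assumes "0 < p" "p \<le> 1"
  shows "measure_pmf.prob (geometric_pmf p) {t. M \<le> t} = (1 - p) ^ M"
proof -
  have "measure_pmf.prob (geometric_pmf p) {..<M} = (\<Sum>t<M. (1 - p) ^ t * p)"
    using assms by (simp add: measure_measure_pmf_finite)
  also have "\<dots> = p * (\<Sum>t<M. (1 - p) ^ t)" by (simp add: sum_distrib_left mult.commute)
  also have "\<dots> = 1 - (1 - p) ^ M" using assms by (simp add: sum_gp_strict)
  finally have A: "measure_pmf.prob (geometric_pmf p) {..<M} = 1 - (1 - p) ^ M" .
  have "{t. M \<le> t} = UNIV - {..<M}" by auto
  then show ?thesis using measure_pmf.prob_compl[of "{..<M}" "geometric_pmf p"] A by simp
qed

definition okL where "okL ST SA L x = (case L of None \<Rightarrow> succ_prefix ST SA x | Some t \<Rightarrow> succ_le ST SA t x)"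

lemma LOSS:
  assumes "0 \<le> p" "p \<le> 1"
  shows "measure_pmf.prob (loss_dist p) {L. okL ST SA L x} = (if succ_prefix ST SA x then (1 - p) ^ mwit ST SA x else 0)"
proof (cases "succ_prefix ST SA x")
  case False
  then have "{L. okL ST SA L x} = {}" by (auto simp: okL_def succ_le_iff split: option.splits)
  then show ?thesis using False by simp
next
  case True
  define M where "M = mwit ST SA x"
  have set: "{L. okL ST SA L x} = {None} \<union> Some ` {t. M \<le> t}"
  proof (rule set_eqI)
    fix L show "L \<in> {L. okL ST SA L x} \<longleftrightarrow> L \<in> {None} \<union> Some ` {t. M \<le> t}"
      using True by (cases L) (auto simp: okL_def succ_le_iff M_def)
  qed
  show ?thesis
  proof (cases "p = 0")
    case True
    then show ?thesis using \<open>succ_prefix ST SA x\<close> by (simp add: loss_dist_def set)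
  next
    case False
    then have p: "0 < p" using assms by simp
    have "measure_pmf.prob (loss_dist p) {L. okL ST SA L x} = measure_pmf.prob (geometric_pmf p) (Some -` ({None} \<union> Some ` {t. M \<le> t}))"
      using False by (simp add: loss_dist_def set del: measure_map_pmf) (simp only: measure_map_pmf)
    also have "Some -` ({None} \<union> Some ` {t. M \<le> t}) = {t. M \<le> t}" by auto
    finally show ?thesis using geo_tail[OF p assms(2)] True by (simp add: M_def)
  qed
qed

context game begin

lemma img_st: "map_pmf (st (Suc t)) (img_prefix T pol sI (Some t) n) = map_pmf (st (Suc t)) (F n sI)"
proof (cases t)
  case 0
  have "(\<lambda>i. sI i) = sI" by simp
  then show ?thesis using 0 by (simp add: img_prefix_def st1_IP st1_F)
next
  case (Suc k)
  then show ?thesis by (simp add: img_prefix_def AG)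
qed

lemma img_okL: "measure_pmf.prob (img_prefix T pol sI L n) {x. succ_prefix ST SA x}
   \<ge> measure_pmf.prob (F n sI) {x. okL ST SA L x}"
proof (cases L)
  case None
  then show ?thesis by (simp add: img_prefix_def okL_def)
next
  case (Some t)
  have "measure_pmf.prob (F n sI) {x. okL ST SA L x} = measure_pmf.prob (F n sI) (st (Suc t) -` {ys. Phi ST SA ys})"
    using Some by (simp add: okL_def succ_le_st vimage_def)
  also have "\<dots> = measure_pmf.prob (map_pmf (st (Suc t)) (F n sI)) {ys. Phi ST SA ys}" by simp
  also have "\<dots> = measure_pmf.prob (map_pmf (st (Suc t)) (img_prefix T pol sI (Some t) n)) {ys. Phi ST SA ys}"
    by (simp only: img_st)
  also have "\<dots> = measure_pmf.prob (img_prefix T pol sI L n) {x. succ_le ST SA t x}"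
    using Some by (simp add: succ_le_st vimage_def)
  also have "\<dots> \<le> measure_pmf.prob (img_prefix T pol sI L n) {x. succ_prefix ST SA x}"
    by (intro measure_pmf.finite_measure_mono) (auto simp: succ_le_iff)
  finally show ?thesis .
qed

lemma MIX2:
  assumes sI: "sI \<in> GS" and p: "0 \<le> p" "p \<le> 1"
  shows "measure_pmf.prob (img_geo_prefix T pol sI p n) {x. succ_prefix ST SA x}
    \<ge> (\<Sum>x\<in>set_pmf (F n sI). pmf (F n sI) x * (if succ_prefix ST SA x then (1 - p) ^ mwit ST SA x else 0))"
proof -
  define S where "S = set_pmf (F n sI)"
  have finS: "finite S" using F_fin[OF sI] by (simp add: S_def)
  have intb: "integrable (measure_pmf (loss_dist p)) (\<lambda>L. measure_pmf.prob (N L) E)" for N :: "_ \<Rightarrow> ('i,'s,'a) prefix pmf" and E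
    by (rule measure_pmf.integrable_const_bound[where B=1]) auto
  have inti: "integrable (measure_pmf (loss_dist p)) (\<lambda>L. indicator {L. okL ST SA L x} L :: real)" for x
    by (rule measure_pmf.integrable_const_bound[where B=1]) auto
  have "measure_pmf.prob (img_geo_prefix T pol sI p n) {x. succ_prefix ST SA x}
      = (\<integral>L. measure_pmf.prob (img_prefix T pol sI L n) {x. succ_prefix ST SA x} \<partial>measure_pmf (loss_dist p))"
    unfolding img_geo_prefix_def by (rule measure_bind_real)
  also have "\<dots> \<ge> (\<integral>L. measure_pmf.prob (F n sI) {x. okL ST SA L x} \<partial>measure_pmf (loss_dist p))"
  proof (rule integral_mono[OF _ intb img_okL])
    show "integrable (measure_pmf (loss_dist p)) (\<lambda>L. measure_pmf.prob (F n sI) {x. okL ST SA L x})"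
      by (rule measure_pmf.integrable_const_bound[where B=1]) auto
  qed
  also have "(\<integral>L. measure_pmf.prob (F n sI) {x. okL ST SA L x} \<partial>measure_pmf (loss_dist p))
      = (\<integral>L. (\<Sum>x\<in>S. pmf (F n sI) x * indicator {L. okL ST SA L x} L) \<partial>measure_pmf (loss_dist p))"
  proof (rule Bochner_Integration.integral_cong[OF refl])
    fix L assume "L \<in> space (measure_pmf (loss_dist p))"
    have "measure_pmf.prob (F n sI) {x. okL ST SA L x} = (\<Sum>x\<in>S \<inter> {x. okL ST SA L x}. pmf (F n sI) x)"
      by (rule meas_fin_sum[OF finS]) (simp add: S_def)
    also have "\<dots> = (\<Sum>x\<in>S. pmf (F n sI) x * indicator {L. okL ST SA L x} L)"
      by (simp add: sum.inter_restrict[OF finS] indicator_def) (rule sum.cong, auto)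
    finally show "measure_pmf.prob (F n sI) {x. okL ST SA L x} = (\<Sum>x\<in>S. pmf (F n sI) x * indicator {L. okL ST SA L x} L)" .
  qed
  also have "\<dots> = (\<Sum>x\<in>S. pmf (F n sI) x * (\<integral>L. indicator {L. okL ST SA L x} L \<partial>measure_pmf (loss_dist p)))"
    by (simp add: integral_sum inti)
  also have "\<dots> = (\<Sum>x\<in>S. pmf (F n sI) x * measure_pmf.prob (loss_dist p) {L. okL ST SA L x})"
    by simp
  also have "\<dots> = (\<Sum>x\<in>S. pmf (F n sI) x * (if succ_prefix ST SA x then (1 - p) ^ mwit ST SA x else 0))"
    by (simp add: LOSS[OF p])
  finally show ?thesis unfolding S_def .
qed

end

lemma JENSEN:
  fixes w m :: "'x \<Rightarrow> real" and q l :: real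
  assumes finA: "finite A" and w0: "\<And>x. x \<in> A \<Longrightarrow> w x \<ge> 0" and V: "(\<Sum>x\<in>A. w x) > 0"
    and q: "0 < q" "q < 1" and ml: "(\<Sum>x\<in>A. w x * m x) \<le> l"
  shows "(\<Sum>x\<in>A. w x * exp (m x * ln q)) \<ge> (\<Sum>x\<in>A. w x) * q powr (l / (\<Sum>x\<in>A. w x))"
proof -
  define V where "V = (\<Sum>x\<in>A. w x)"
  have Vp: "V > 0" using V by (simp add: V_def)
  have Ane: "A \<noteq> {}" using V by auto
  have a1: "(\<Sum>x\<in>A. w x / V) = 1" using Vp by (simp add: sum_divide_distrib[symmetric] V_def)
  have "exp (\<Sum>x\<in>A. (w x / V) *\<^sub>R (m x * ln q)) \<le> (\<Sum>x\<in>A. (w x / V) * exp (m x * ln q))"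
    by (rule convex_on_sum[OF finA Ane exp_convex a1]) (use w0 Vp in \<open>auto intro: divide_nonneg_pos\<close>)
  also have "(\<Sum>x\<in>A. (w x / V) * exp (m x * ln q)) = (\<Sum>x\<in>A. w x * exp (m x * ln q)) / V"
    by (simp add: sum_divide_distrib)
  also have "(\<Sum>x\<in>A. (w x / V) *\<^sub>R (m x * ln q)) = ln q * ((\<Sum>x\<in>A. w x * m x) / V)"
    by (simp add: sum_divide_distrib sum_distrib_left mult_ac)
  finally have A1: "exp (ln q * ((\<Sum>x\<in>A. w x * m x) / V)) \<le> (\<Sum>x\<in>A. w x * exp (m x * ln q)) / V" .
  have lnq: "ln q < 0" using q by simp
  have "ln q * (l / V) \<le> ln q * ((\<Sum>x\<in>A. w x * m x) / V)"
    using ml Vp lnq by (intro mult_left_mono_neg divide_right_mono) auto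
  then have "q powr (l / V) \<le> exp (ln q * ((\<Sum>x\<in>A. w x * m x) / V))"
    using q by (simp add: powr_def mult.commute)
  also note A1
  finally have "q powr (l / V) \<le> (\<Sum>x\<in>A. w x * exp (m x * ln q)) / V" .
  then show ?thesis using Vp unfolding V_def[symmetric] by (simp add: field_simps)
qed

context game begin

lemma F_drop: "x \<in> set_pmf (F n s) \<Longrightarrow> t < n \<Longrightarrow> drop t x \<in> set_pmf (F (n - t) (fst (x ! t)))"
proof (induction t arbitrary: n s x)
  case 0
  then obtain n' where n: "n = Suc n'" by (cases n) auto
  then show ?case using 0 F_first[of x T pol n' s] by simp
next
  case (Suc t)
  then obtain n' where n: "n = Suc n'" by (cases n) auto
  from Suc.prems(1) n obtain a s' rest where s': "rest \<in> set_pmf (F n' s')" and x: "x = (s, a) # rest"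
    by auto
  have "drop t rest \<in> set_pmf (F (n' - t) (fst (rest ! t)))"
    using Suc.IH[OF s'] Suc.prems(2) n by simp
  then show ?case using x n by simp
qed

lemma reach_ge: "reach_prob ST SA P \<ge> measure_pmf.prob (P n) {xs. succ_prefix ST SA xs}"
  unfolding reach_prob_def by (rule cSUP_upper) (auto intro!: bdd_aboveI[where M=1])

lemma DL:
  assumes x: "x \<in> set_pmf (F n s)" and sx: "succ_prefix ST SA x" and t: "t < mwit ST SA x"
  shows "fst (x ! t) \<notin> dead_set T pol ST SA"
proof
  assume dead: "fst (x ! t) \<in> dead_set T pol ST SA"
  define M where "M = mwit ST SA x"
  have w: "wit ST SA x M" using mwit_wit[OF sx] by (simp add: M_def)
  have lx: "length x = n" using F_len x by blast
  have tn: "t < n" using w t lx by (simp add: wit_def M_def)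
  define y where "y = drop t x"
  have y: "y \<in> set_pmf (F (n - t) (fst (x ! t)))" unfolding y_def by (rule F_drop[OF x tn])
  have "wit ST SA y (M - t)"
    using w t lx unfolding wit_def y_def M_def by (auto simp: add.commute)
  then have sy: "succ_prefix ST SA y" by (auto simp: succ_wit)
  have "0 < pmf (F (n - t) (fst (x ! t))) y" using y by (simp add: pmf_positive)
  also have "pmf (F (n - t) (fst (x ! t))) y \<le> measure_pmf.prob (F (n - t) (fst (x ! t))) {xs. succ_prefix ST SA xs}"
    using sy by (simp add: measure_pmf_single[symmetric] measure_pmf.finite_measure_mono)
  also have "\<dots> \<le> reach_prob ST SA (\<lambda>n. F n (fst (x ! t)))" by (rule reach_ge)
  finally show False using dead by (simp add: dead_set_def)
qed

lemma TL:
  assumes x: "x \<in> set_pmf (F n s)" and sx: "succ_prefix ST SA x"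
  shows "mwit ST SA x < trunc_len (ST \<union> dead_set T pol ST SA) n x"
proof -
  define M where "M = mwit ST SA x"
  define TD where "TD = ST \<union> dead_set T pol ST SA"
  have w: "wit ST SA x M" using mwit_wit[OF sx] by (simp add: M_def)
  have lx: "length x = n" using F_len x by blast
  have ex: "\<exists>t<n. fst (x ! t) \<in> TD" using w lx by (auto simp: wit_def TD_def)
  have notTD: "fst (x ! t) \<notin> TD" if tM: "t < M" for t
  proof
    assume "fst (x ! t) \<in> TD"
    moreover have "fst (x ! t) \<notin> dead_set T pol ST SA" using DL[OF x sx] tM by (simp add: M_def)
    ultimately have "fst (x ! t) \<in> ST" by (simp add: TD_def)
    then have "wit ST SA x t" using w tM by (auto simp: wit_def)
    then have "M \<le> t" using mwit_le by (simp add: M_def)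
    then show False using tM by simp
  qed
  have "M \<le> (LEAST t. fst (x ! t) \<in> TD)"
  proof (rule ccontr)
    assume "\<not> M \<le> (LEAST t. fst (x ! t) \<in> TD)"
    moreover have "fst (x ! (LEAST t. fst (x ! t) \<in> TD)) \<in> TD" using ex by (auto intro: LeastI_ex)
    ultimately show False using notTD by simp
  qed
  then show ?thesis using ex unfolding trunc_len_def TD_def[symmetric] M_def[symmetric] by simp
qed

end

definition nh where "nh TD (x :: ('i,'s,'a) prefix) \<longleftrightarrow> (\<forall>j<length x. fst (x ! j) \<notin> TD)"

lemma nh_take: "nh TD x \<Longrightarrow> nh TD (take j x)"
  by (auto simp: nh_def)

lemma nh_app: "nh TD (h @ r) \<longleftrightarrow> nh TD h \<and> nh TD r"
  by (auto simp: nh_def nth_append) (metis add_diff_cancel_left' not_add_less1 nat_add_left_cancel_less)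

lemma F_take: "j \<le> n \<Longrightarrow> map_pmf (take j) (full_prefix T pol n s) = full_prefix T pol j s"
proof (induction n arbitrary: j s)
  case 0 then show ?case by simp
next
  case (Suc n)
  show ?case
  proof (cases j)
    case 0 then show ?thesis by simp
  next
    case (Suc j')
    then have "j' \<le> n" using Suc.prems by simp
    have "map_pmf (take j) (full_prefix T pol (Suc n) s) =
      bind_pmf (pol s) (\<lambda>a. bind_pmf (joint_step T s a) (\<lambda>s'. map_pmf ((#) (s, a)) (map_pmf (take j') (full_prefix T pol n s'))))"
      using Suc by (simp add: map_bind_pmf pmf.map_comp o_def map_pmf_def[symmetric])
    also have "\<dots> = full_prefix T pol j s"
      using Suc.IH[OF \<open>j' \<le> n\<close>] Suc by (simp add: map_pmf_def)
    finally show ?thesis .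
  qed
qed

context game begin

definition "q TD n s = measure_pmf.prob (F n s) {x. nh TD x}"

lemma q_le1: "q TD n s \<le> 1" by (simp add: q_def)
lemma q_ge0: "q TD n s \<ge> 0" by (simp add: q_def)

lemma q_mono: "j \<le> n \<Longrightarrow> q TD n s \<le> q TD j s"
proof -
  assume jn: "j \<le> n"
  have "q TD n s \<le> measure_pmf.prob (F n s) (take j -` {x. nh TD x})"
    unfolding q_def by (intro measure_pmf.finite_measure_mono) (auto intro: nh_take)
  also have "\<dots> = measure_pmf.prob (map_pmf (take j) (F n s)) {x. nh TD x}" by simp
  also have "\<dots> = q TD j s" unfolding q_def F_take[OF jn] ..
  finally show ?thesis .
qed

lemma hit:
  assumes s: "s \<in> GS"
  shows "\<exists>n\<ge>1. q (ST \<union> dead_set T pol ST SA) n s < 1"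
proof (cases "s \<in> ST \<union> dead_set T pol ST SA")
  case True
  have "q (ST \<union> dead_set T pol ST SA) 1 s = 0"
    unfolding q_def measure_pmf_zero_iff
  proof (rule ccontr)
    assume "set_pmf (F 1 s) \<inter> {x. nh (ST \<union> dead_set T pol ST SA) x} \<noteq> {}"
    then obtain x where x: "x \<in> set_pmf (F 1 s)" "nh (ST \<union> dead_set T pol ST SA) x" by auto
    have "length x = 1" using F_len x(1) by blast
    moreover have "fst (x ! 0) = s" using F_first[of x T pol 0 s] x(1) by simp
    ultimately show False using x(2) True by (auto simp: nh_def)
  qed
  then show ?thesis by (intro exI[of _ 1]) simp
next
  case False
  then have nd: "s \<notin> dead_set T pol ST SA" by simp
  have "\<exists>n. measure_pmf.prob (F n s) {x. succ_prefix ST SA x} > 0"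
  proof (rule ccontr)
    assume "\<not> ?thesis"
    then have "\<forall>n. measure_pmf.prob (F n s) {x. succ_prefix ST SA x} \<le> 0" by (simp add: not_less)
    then have "reach_prob ST SA (\<lambda>n. F n s) \<le> 0" unfolding reach_prob_def by (intro cSUP_least) auto
    moreover have "reach_prob ST SA (\<lambda>n. F n s) \<ge> 0" using reach_ge[where P="\<lambda>n. F n s" and n=0 and ST=ST and SA=SA] by (simp add: succ_prefix_def)
    ultimately show False using nd by (simp add: dead_set_def)
  qed
  then obtain n where pos: "measure_pmf.prob (F n s) {x. succ_prefix ST SA x} > 0" by blast
  have n1: "n \<ge> 1"
  proof (rule ccontr)
    assume "\<not> n \<ge> 1" then have "n = 0" by simp
    then show False using pos by (simp add: succ_prefix_def)
  qed
  have disj: "{x. nh (ST \<union> dead_set T pol ST SA) x} \<inter> {x. succ_prefix ST SA x} = {}"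
    by (auto simp: nh_def succ_prefix_def)
  have "q (ST \<union> dead_set T pol ST SA) n s + measure_pmf.prob (F n s) {x. succ_prefix ST SA x}
      = measure_pmf.prob (F n s) ({x. nh (ST \<union> dead_set T pol ST SA) x} \<union> {x. succ_prefix ST SA x})"
    unfolding q_def by (rule measure_pmf.finite_measure_Union[symmetric]) (use disj in auto)
  also have "\<dots> \<le> 1" by simp
  finally show ?thesis using pos n1 by (intro exI[of _ n]) auto
qed

end

lemma regroup:
  fixes f :: "nat \<Rightarrow> real"
  shows "(\<Sum>t<N * c. f (t div N)) = real N * (\<Sum>j<c. f j)"
proof (induction c)
  case 0 then show ?case by simp
next
  case (Suc c)
  have split: "{..<N * Suc c} = {..<N * c} \<union> {N * c..<N * c + N}" by auto
  have "(\<Sum>t\<in>{N * c..<N * c + N}. f (t div N)) = (\<Sum>t\<in>{N * c..<N * c + N}. f c)"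
  proof (intro sum.cong refl)
    fix t assume t: "t \<in> {N * c..<N * c + N}"
    then have "t div N = c"
      by (intro div_nat_eqI) auto
    then show "f (t div N) = f c" by simp
  qed
  also have "\<dots> = real N * f c" by simp
  finally have A: "(\<Sum>t\<in>{N * c..<N * c + N}. f (t div N)) = real N * f c" .
  have "(\<Sum>t<N * Suc c. f (t div N)) = (\<Sum>t<N * c. f (t div N)) + (\<Sum>t\<in>{N * c..<N * c + N}. f (t div N))"
    unfolding split by (rule sum.union_disjoint) auto
  then show ?case using Suc.IH A by (simp add: distrib_left)
qed

lemma geo_div_bound:
  fixes \<beta> :: real
  assumes N: "N \<ge> 1" and b: "0 \<le> \<beta>" "\<beta> < 1"
  shows "(\<Sum>t<n. \<beta> ^ (t div N)) \<le> real N / (1 - \<beta>)"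
proof -
  have "(\<Sum>t<n. \<beta> ^ (t div N)) \<le> (\<Sum>t<N * n. \<beta> ^ (t div N))"
    using N b by (intro sum_mono2) auto
  also have "\<dots> = real N * (\<Sum>j<n. \<beta> ^ j)" by (rule regroup)
  also have "(\<Sum>j<n. \<beta> ^ j) \<le> 1 / (1 - \<beta>)"
    using b by (simp add: sum_gp_strict divide_right_mono)
  then have "real N * (\<Sum>j<n. \<beta> ^ j) \<le> real N * (1 / (1 - \<beta>))" by (intro mult_left_mono) auto
  finally show ?thesis by simp
qed

context game begin

lemma uniform:
  assumes ne: "GS \<noteq> {}"
  shows "\<exists>N\<ge>1. \<exists>\<beta>. 0 \<le> \<beta> \<and> \<beta> < 1 \<and> (\<forall>s\<in>GS. q (ST \<union> dead_set T pol ST SA) N s \<le> \<beta>)"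
proof -
  let ?TD = "ST \<union> dead_set T pol ST SA"
  have "\<forall>s\<in>GS. \<exists>n. n \<ge> 1 \<and> q ?TD n s < 1" using hit by blast
  then obtain nf where nf: "\<And>s. s \<in> GS \<Longrightarrow> nf s \<ge> 1 \<and> q ?TD (nf s) s < 1" by metis
  define N where "N = Max (nf ` GS)"
  obtain s0 where s0: "s0 \<in> GS" using ne by blast
  have Nge: "nf s \<le> N" if "s \<in> GS" for s unfolding N_def using fin_GS that by simp
  have N1: "N \<ge> 1" using Nge[OF s0] nf[OF s0] by simp
  define \<beta> where "\<beta> = Max ((\<lambda>s. q ?TD N s) ` GS)"
  have qN: "q ?TD N s < 1" if "s \<in> GS" for s
    using q_mono[OF Nge[OF that], of ?TD s] nf[OF that] by simp
  have bin: "\<beta> \<in> (\<lambda>s. q ?TD N s) ` GS" unfolding \<beta>_def using fin_GS ne by (intro Max_in) auto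
  have b1: "\<beta> < 1" using bin qN by auto
  have b0: "\<beta> \<ge> 0" using bin q_ge0 by auto
  have bge: "q ?TD N s \<le> \<beta>" if "s \<in> GS" for s unfolding \<beta>_def using fin_GS that by simp
  show ?thesis using N1 b0 b1 bge by blast
qed

definition "B TD m = Max ((\<lambda>s. q TD m s) ` GS)"

lemma B_ge: "s \<in> GS \<Longrightarrow> q TD m s \<le> B TD m"
  unfolding B_def using fin_GS by simp

lemma B_le: "GS \<noteq> {} \<Longrightarrow> (\<And>s. s \<in> GS \<Longrightarrow> q TD m s \<le> c) \<Longrightarrow> B TD m \<le> c"
  unfolding B_def using fin_GS by simp

lemma B_ge0: "GS \<noteq> {} \<Longrightarrow> B TD m \<ge> 0"
proof -
  assume "GS \<noteq> {}"
  then obtain s where s: "s \<in> GS" by blast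
  show ?thesis using B_ge[OF s, of TD m] q_ge0[of TD m s] by linarith
qed

lemma B_anti: "GS \<noteq> {} \<Longrightarrow> j \<le> n \<Longrightarrow> B TD n \<le> B TD j"
  by (rule B_le) (auto intro: order_trans[OF q_mono B_ge])

lemma submult:
  assumes s: "s \<in> GS"
  shows "q TD (Suc k + m) s \<le> q TD (Suc k) s * B TD m"
proof -
  have lastG: "last h \<in> GS \<times> GA" if "h \<in> set_pmf (F (Suc k) s)" for h
  proof -
    have "h \<in> GL (Suc k)" using F_set[OF s, of "Suc k"] that by (rule subsetD)
    then have "h \<noteq> []" "set h \<subseteq> GS \<times> GA" by (auto simp: GL_def)
    then show ?thesis using last_in_set by blast
  qed
  have Pd_le: "measure_pmf.prob (Pd T pol m sa) {x. nh TD x} \<le> B TD m" if sa: "sa \<in> GS \<times> GA" for sa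
  proof -
    have "measure_pmf.prob (Pd T pol m sa) {x. nh TD x} = (\<integral>s'. q TD m s' \<partial>measure_pmf (joint_step T (fst sa) (snd sa)))"
      unfolding Pd_def q_def by (rule measure_bind_real)
    also have "\<dots> \<le> B TD m"
    proof (rule measure_pmf.integral_le_const)
      show "integrable (measure_pmf (joint_step T (fst sa) (snd sa))) (q TD m)"
        by (rule measure_pmf.integrable_const_bound[where B=1]) (auto simp: q_le1 q_ge0)
      show "AE x in measure_pmf (joint_step T (fst sa) (snd sa)). q TD m x \<le> B TD m"
        using step_set[of "fst sa" "snd sa"] sa by (auto simp: AE_measure_pmf_iff intro!: B_ge)
    qed
    finally show ?thesis .
  qed
  have "q TD (Suc k + m) s = (\<integral>h. measure_pmf.prob (map_pmf (\<lambda>r. h @ r) (Pd T pol m (last h))) {x. nh TD x} \<partial>measure_pmf (F (Suc k) s))"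
    unfolding q_def FD by (rule measure_bind_real)
  also have "\<dots> \<le> (\<integral>h. indicator {x. nh TD x} h * B TD m \<partial>measure_pmf (F (Suc k) s))"
  proof (rule integral_mono_AE)
    show "integrable (measure_pmf (F (Suc k) s)) (\<lambda>h. measure_pmf.prob (map_pmf (\<lambda>r. h @ r) (Pd T pol m (last h))) {x. nh TD x})"
      by (rule measure_pmf.integrable_const_bound[where B=1]) auto
    show "integrable (measure_pmf (F (Suc k) s)) (\<lambda>h. indicator {x. nh TD x} h * B TD m)"
      by (rule integrable_measure_pmf_finite[OF F_fin[OF s]])
    show "AE h in measure_pmf (F (Suc k) s). measure_pmf.prob (map_pmf (\<lambda>r. h @ r) (Pd T pol m (last h))) {x. nh TD x}
            \<le> indicator {x. nh TD x} h * B TD m"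
    proof (unfold AE_measure_pmf_iff, intro ballI)
      fix h assume h: "h \<in> set_pmf (F (Suc k) s)"
      have eq: "measure_pmf.prob (map_pmf (\<lambda>r. h @ r) (Pd T pol m (last h))) {x. nh TD x}
          = measure_pmf.prob (Pd T pol m (last h)) {r. nh TD h \<and> nh TD r}"
        by (simp add: vimage_def nh_app)
      show "measure_pmf.prob (map_pmf (\<lambda>r. h @ r) (Pd T pol m (last h))) {x. nh TD x} \<le> indicator {x. nh TD x} h * B TD m"
      proof (cases "nh TD h")
        case True
        then show ?thesis using eq Pd_le[OF lastG[OF h]] by simp
      next
        case False
        then show ?thesis using eq by simp
      qed
    qed
  qed
  also have "\<dots> = q TD (Suc k) s * B TD m"
    by (simp add: q_def)
  finally show ?thesis .
qed

lemma decay: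
  assumes ne: "GS \<noteq> {}" and N: "N \<ge> 1" and b: "0 \<le> \<beta>" and qN: "\<And>s. s \<in> GS \<Longrightarrow> q TD N s \<le> \<beta>"
  shows "B TD (j * N) \<le> \<beta> ^ j"
proof (induction j)
  case 0
  show ?case by (simp, rule B_le[OF ne]) (simp add: q_le1)
next
  case (Suc j)
  obtain k where k: "N = Suc k" using N by (cases N) auto
  have "B TD (Suc j * N) \<le> \<beta> * B TD (j * N)"
  proof (rule B_le[OF ne])
    fix s assume s: "s \<in> GS"
    have "Suc j * N = Suc k + j * N" by (simp only: mult_Suc k)
    then have "q TD (Suc j * N) s = q TD (Suc k + j * N) s" by (rule arg_cong)
    also have "\<dots> \<le> q TD (Suc k) s * B TD (j * N)" by (rule submult[OF s])
    also have "\<dots> \<le> \<beta> * B TD (j * N)"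
      using qN[OF s] k B_ge0[OF ne] by (intro mult_right_mono) auto
    finally show "q TD (Suc j * N) s \<le> \<beta> * B TD (j * N)" .
  qed
  also have "\<dots> \<le> \<beta> * \<beta> ^ j" using Suc.IH b by (intro mult_left_mono) auto
  finally show ?case by simp
qed

end

lemma sum_ind_card: "(\<Sum>t<(n::nat). indicator {x. P t x} x :: real) = real (card {t. t < n \<and> P t x})"
proof -
  have "(\<Sum>t<(n::nat). indicator {x. P t x} x :: real) = (\<Sum>t<n. if P t x then 1 else 0)"
    by (rule sum.cong) (auto simp: indicator_def)
  also have "\<dots> = (\<Sum>t\<in>{t\<in>{..<n}. P t x}. (1::real))"
    by (rule sum.inter_filter[symmetric]) simp
  also have "\<dots> = real (card {t\<in>{..<n}. P t x})" by (rule real_of_card[symmetric])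
  also have "{t\<in>{..<n}. P t x} = {t. t < n \<and> P t x}" by auto
  finally show ?thesis .
qed

context game begin

lemma tl_card:
  assumes x: "x \<in> set_pmf (F n s)"
  shows "real (trunc_len TD n x) \<le> 1 + (\<Sum>t<n. indicator {x. nh TD (take (Suc t) x)} x)"
proof -
  define C where "C = {t. t < n \<and> nh TD (take (Suc t) x)}"
  have lx: "length x = n" using F_len x by blast
  have finC: "finite C" by (simp add: C_def)
  have "trunc_len TD n x \<le> Suc (card C)"
  proof (cases "\<exists>t<n. fst (x ! t) \<in> TD")
    case True
    define f where "f = (LEAST t. fst (x ! t) \<in> TD)"
    have tl: "trunc_len TD n x = Suc f" using True by (simp add: trunc_len_def f_def)
    obtain t0 where t0: "t0 < n" "fst (x ! t0) \<in> TD" using True by blast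
    have fn: "f \<le> t0" unfolding f_def by (rule Least_le) (rule t0(2))
    have sub: "{..<f} \<subseteq> C"
    proof
      fix t assume t: "t \<in> {..<f}"
      have "fst (take (Suc t) x ! j) \<notin> TD" if j: "j < length (take (Suc t) x)" for j
      proof -
        have "j < f" using j t by simp
        then have "fst (x ! j) \<notin> TD" unfolding f_def by (rule not_less_Least)
        then show ?thesis using j by simp
      qed
      then show "t \<in> C" using t fn t0 by (auto simp: C_def nh_def)
    qed
    have "f \<le> card C" using card_mono[OF finC sub] by simp
    then show ?thesis using tl by simp
  next
    case False
    have "C = {..<n}" using False lx by (auto simp: C_def nh_def)
    then show ?thesis using False by (auto simp: trunc_len_def)
  qed
  then show ?thesis unfolding sum_ind_card C_def by simp
qed

lemma E_bound:
  assumes sI: "sI \<in> GS" and N: "N \<ge> 1" and b: "0 \<le> \<beta>" "\<beta> < 1"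
    and qN: "\<And>s. s \<in> GS \<Longrightarrow> q TD N s \<le> \<beta>"
  shows "(\<integral>x. real (trunc_len TD n x) \<partial>measure_pmf (F n sI)) \<le> 1 + real N / (1 - \<beta>)"
proof -
  have ne: "GS \<noteq> {}" using sI by blast
  have intF: "integrable (measure_pmf (F n sI)) g" for g :: "_ \<Rightarrow> real"
    by (rule integrable_measure_pmf_finite[OF F_fin[OF sI]])
  have "(\<integral>x. real (trunc_len TD n x) \<partial>measure_pmf (F n sI))
      \<le> (\<integral>x. 1 + (\<Sum>t<n. indicator {x. nh TD (take (Suc t) x)} x) \<partial>measure_pmf (F n sI))"
    by (rule integral_mono_AE[OF intF intF]) (auto simp: AE_measure_pmf_iff intro!: tl_card)
  also have "\<dots> = 1 + (\<Sum>t<n. measure_pmf.prob (F n sI) {x. nh TD (take (Suc t) x)})"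
    by (simp add: intF integral_sum)
  also have "(\<Sum>t<n. measure_pmf.prob (F n sI) {x. nh TD (take (Suc t) x)}) = (\<Sum>t<n. q TD (Suc t) sI)"
  proof (intro sum.cong refl)
    fix t assume t: "t \<in> {..<n}"
    have "measure_pmf.prob (F n sI) {x. nh TD (take (Suc t) x)} = measure_pmf.prob (map_pmf (take (Suc t)) (F n sI)) {x. nh TD x}"
      by (simp add: vimage_def)
    also have "\<dots> = q TD (Suc t) sI" using t by (simp add: F_take q_def)
    finally show "measure_pmf.prob (F n sI) {x. nh TD (take (Suc t) x)} = q TD (Suc t) sI" .
  qed
  also have "(\<Sum>t<n. q TD (Suc t) sI) \<le> (\<Sum>t<n. \<beta> ^ (t div N))"
  proof (rule sum_mono)
    fix t
    have "q TD (Suc t) sI \<le> B TD (Suc t)" by (rule B_ge[OF sI])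
    also have "\<dots> \<le> B TD (t div N * N)"
      by (rule B_anti[OF ne]) (meson div_times_less_eq_dividend le_SucI)
    also have "\<dots> \<le> \<beta> ^ (t div N)" by (rule decay[OF ne N b(1) qN])
    finally show "q TD (Suc t) sI \<le> \<beta> ^ (t div N)" .
  qed
  also have "\<dots> \<le> real N / (1 - \<beta>)" by (rule geo_div_bound[OF N b])
  finally show ?thesis by simp
qed

lemma nn_trunc:
  assumes sI: "sI \<in> GS"
  shows "(\<integral>\<^sup>+x. of_nat (trunc_len TD n x) \<partial>measure_pmf (F n sI))
       = ennreal (\<integral>x. real (trunc_len TD n x) \<partial>measure_pmf (F n sI))"
proof -
  have "(\<integral>\<^sup>+x. of_nat (trunc_len TD n x) \<partial>measure_pmf (F n sI)) = (\<integral>\<^sup>+x. ennreal (real (trunc_len TD n x)) \<partial>measure_pmf (F n sI))"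
    by (simp add: ennreal_of_nat_eq_real_of_nat)
  also have "\<dots> = ennreal (\<integral>x. real (trunc_len TD n x) \<partial>measure_pmf (F n sI))"
    by (rule nn_integral_eq_integral[OF integrable_measure_pmf_finite[OF F_fin[OF sI]]]) auto
  finally show ?thesis .
qed

lemma l_fin:
  assumes sI: "sI \<in> GS"
  shows "l_full T pol sI ST SA < \<infinity>"
proof -
  let ?TD = "ST \<union> dead_set T pol ST SA"
  have ne: "GS \<noteq> {}" using sI by blast
  obtain N \<beta> where N: "N \<ge> 1" and b: "0 \<le> \<beta>" "\<beta> < 1" and qN: "\<And>s. s \<in> GS \<Longrightarrow> q ?TD N s \<le> \<beta>"
    using uniform[OF ne] by blast
  have "l_full T pol sI ST SA \<le> ennreal (1 + real N / (1 - \<beta>))"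
    unfolding l_full_def
  proof (rule SUP_least)
    fix n
    show "(\<integral>\<^sup>+x. of_nat (trunc_len ?TD n x) \<partial>measure_pmf (F n sI)) \<le> ennreal (1 + real N / (1 - \<beta>))"
      unfolding nn_trunc[OF sI] using E_bound[OF sI N b qN, of n] by (simp add: ennreal_leI)
  qed
  also have "\<dots> < \<infinity>" by simp
  finally show ?thesis .
qed

lemma E_le_l:
  assumes sI: "sI \<in> GS"
  shows "(\<integral>x. real (trunc_len (ST \<union> dead_set T pol ST SA) n x) \<partial>measure_pmf (F n sI)) \<le> enn2real (l_full T pol sI ST SA)"
proof -
  let ?TD = "ST \<union> dead_set T pol ST SA"
  have "ennreal (\<integral>x. real (trunc_len ?TD n x) \<partial>measure_pmf (F n sI)) \<le> l_full T pol sI ST SA"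
    unfolding nn_trunc[OF sI, symmetric] l_full_def by (rule SUP_upper) simp
  then have "enn2real (ennreal (\<integral>x. real (trunc_len ?TD n x) \<partial>measure_pmf (F n sI))) \<le> enn2real (l_full T pol sI ST SA)"
    by (rule enn2real_mono) (use l_fin[OF sI] in simp)
  moreover have "(\<integral>x. real (trunc_len ?TD n x) \<partial>measure_pmf (F n sI)) \<ge> 0" by simp
  ultimately show ?thesis by simp
qed

end

context game begin

lemma B2n:
  assumes sI: "sI \<in> GS" and p: "0 \<le> p" "p \<le> 1"
  shows "measure_pmf.prob (img_geo_prefix T pol sI p n) {x. succ_prefix ST SA x}
     \<ge> measure_pmf.prob (F n sI) {x. succ_prefix ST SA x} * (1 - p) powr (enn2real (l_full T pol sI ST SA) / measure_pmf.prob (F n sI) {x. succ_prefix ST SA x})"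
proof -
  define v where "v = measure_pmf.prob (F n sI) {x. succ_prefix ST SA x}"
  define S where "S = set_pmf (F n sI)"
  define A where "A = S \<inter> {x. succ_prefix ST SA x}"
  define l where "l = enn2real (l_full T pol sI ST SA)"
  define m where "m x = real (mwit ST SA x)" for x :: "('i,'s,'a) prefix"
  have finS: "finite S" using F_fin[OF sI] by (simp add: S_def)
  have finA: "finite A" using finS by (simp add: A_def)
  have img: "measure_pmf.prob (img_geo_prefix T pol sI p n) {x. succ_prefix ST SA x}
      \<ge> (\<Sum>x\<in>A. pmf (F n sI) x * (1 - p) ^ mwit ST SA x)"
  proof -
    have "(\<Sum>x\<in>S. pmf (F n sI) x * (if succ_prefix ST SA x then (1 - p) ^ mwit ST SA x else 0))
        = (\<Sum>x\<in>A. pmf (F n sI) x * (1 - p) ^ mwit ST SA x)"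
      unfolding A_def by (simp add: sum.inter_restrict[OF finS] if_distrib cong: if_cong)
    then show ?thesis using MIX2[OF sI p, of n ST SA] by (simp add: S_def)
  qed
  have vA: "v = (\<Sum>x\<in>A. pmf (F n sI) x)"
    unfolding v_def A_def by (rule meas_fin_sum[OF finS]) (simp add: S_def)
  have ml: "(\<Sum>x\<in>A. pmf (F n sI) x * m x) \<le> l"
  proof -
    have "(\<Sum>x\<in>A. pmf (F n sI) x * m x) \<le> (\<Sum>x\<in>A. pmf (F n sI) x * real (trunc_len (ST \<union> dead_set T pol ST SA) n x))"
    proof (intro sum_mono mult_left_mono)
      fix x assume x: "x \<in> A"
      then have "mwit ST SA x < trunc_len (ST \<union> dead_set T pol ST SA) n x"
        by (intro TL[of x n sI]) (auto simp: A_def S_def)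
      then show "m x \<le> real (trunc_len (ST \<union> dead_set T pol ST SA) n x)" by (simp add: m_def)
    qed simp
    also have "\<dots> \<le> (\<Sum>x\<in>S. pmf (F n sI) x * real (trunc_len (ST \<union> dead_set T pol ST SA) n x))"
      by (intro sum_mono2 finS) (auto simp: A_def)
    also have "\<dots> = (\<integral>x. real (trunc_len (ST \<union> dead_set T pol ST SA) n x) \<partial>measure_pmf (F n sI))"
      unfolding S_def by (rule int_fin_sum[symmetric]) (rule F_fin[OF sI])
    also have "\<dots> \<le> l" unfolding l_def by (rule E_le_l[OF sI])
    finally show ?thesis .
  qed
  have mpos: "(\<Sum>x\<in>A. pmf (F n sI) x * (1 - p) ^ mwit ST SA x) \<ge> 0"
    using p by (intro sum_nonneg mult_nonneg_nonneg) auto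
  have main: "measure_pmf.prob (img_geo_prefix T pol sI p n) {x. succ_prefix ST SA x} \<ge> v * (1 - p) powr (l / v)"
  proof (cases "v = 0 \<or> p = 1")
    case True
    then show ?thesis using img mpos by auto
  next
    case False
    have "v \<ge> 0" by (simp add: v_def)
    then have v0: "v > 0" and p1: "p < 1" using False p by auto
    show ?thesis
    proof (cases "p = 0")
      case True
      then show ?thesis using img vA by simp
    next
      case False
      then have q: "0 < 1 - p" "1 - p < 1" using p p1 by auto
      have "(\<Sum>x\<in>A. pmf (F n sI) x * exp (m x * ln (1 - p))) \<ge> (\<Sum>x\<in>A. pmf (F n sI) x) * (1 - p) powr (l / (\<Sum>x\<in>A. pmf (F n sI) x))"
        by (rule JENSEN[OF finA _ _ q ml]) (use v0 vA in auto)
      moreover have "exp (m x * ln (1 - p)) = (1 - p) ^ mwit ST SA x" for x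
        using q by (simp add: m_def exp_of_nat_mult)
      ultimately show ?thesis using img vA by simp
    qed
  qed
  then show ?thesis by (simp add: v_def l_def)
qed

lemma bound2:
  assumes sI: "sI \<in> GS" and p: "0 \<le> p" "p \<le> 1" and vpos: "v_full T pol sI ST SA > 0"
  shows "v_img T pol sI ST SA p \<ge> v_full T pol sI ST SA * (1 - p) powr (enn2real (l_full T pol sI ST SA) / v_full T pol sI ST SA)"
proof -
  define l where "l = enn2real (l_full T pol sI ST SA)"
  define v where "v = v_full T pol sI ST SA"
  define vn where "vn n = measure_pmf.prob (F n sI) {x. succ_prefix ST SA x}" for n
  define g where "g y = y * (1 - p) powr (l / y)" for y :: real
  define w where "w = v_img T pol sI ST SA p"
  have vsup: "v = (SUP n. vn n)" by (simp add: v_def v_full_def reach_prob_def vn_def)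
  have gn: "w \<ge> g (vn n)" for n
  proof -
    have "g (vn n) \<le> measure_pmf.prob (img_geo_prefix T pol sI p n) {x. succ_prefix ST SA x}"
      unfolding g_def vn_def l_def by (rule B2n[OF sI p])
    also have "\<dots> \<le> w" unfolding w_def v_img_def by (rule reach_ge)
    finally show ?thesis .
  qed
  have w0: "w \<ge> 0" using gn[of 0] by (simp add: g_def vn_def succ_prefix_def)
  have v0: "v > 0" using vpos by (simp add: v_def)
  have main: "g v \<le> w"
  proof (cases "p = 1")
    case True
    then show ?thesis using w0 by (simp add: g_def)
  next
    case False
    then have q: "0 < 1 - p" using p by simp
    show ?thesis
    proof (rule ccontr)
      assume "\<not> g v \<le> w"
      then have eps: "g v - w > 0" by simp
      have "isCont g v" unfolding g_def using v0 q by (intro continuous_intros) auto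
      then obtain d where d: "d > 0" and dd: "\<And>y. dist y v < d \<Longrightarrow> dist (g y) (g v) < g v - w"
        using eps unfolding continuous_at_eps_delta by blast
      have bdd: "bdd_above (range vn)" by (intro bdd_aboveI[where M=1]) (auto simp: vn_def)
      have "v - d < (SUP n. vn n)" using d vsup by simp
      then obtain n where n: "v - d < vn n" using less_cSUP_iff[of UNIV vn "v - d"] bdd by auto
      have "vn n \<le> v" unfolding vsup by (rule cSUP_upper[OF _ bdd]) simp
      then have "dist (vn n) v < d" using n d by (simp add: dist_real_def)
      then have "dist (g (vn n)) (g v) < g v - w" by (rule dd)
      then have "g (vn n) > w" by (simp add: dist_real_def)
      then show False using gn[of n] by simp
    qed
  qed
  then show ?thesis by (simp add: g_def v_def w_def l_def)
qed

lemma bound1: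
  assumes sI: "sI \<in> GS"
  shows "v_img T pol sI ST SA p \<ge> v_full T pol sI ST SA - sqrt (1 - exp_neg (total_corr T pol sI))"
proof -
  define c where "c = sqrt (1 - exp_neg (total_corr T pol sI))"
  have tcle: "sqrt (1 - exp (- tc sI n)) \<le> c" for n
  proof -
    have le: "ereal (tc sI n) \<le> total_corr T pol sI" unfolding total_corr_def by (rule SUP_upper) simp
    have "exp_neg (total_corr T pol sI) \<le> exp (- tc sI n)"
    proof (cases "total_corr T pol sI = \<infinity>")
      case True then show ?thesis by (simp add: exp_neg_def)
    next
      case False
      then obtain r where r: "total_corr T pol sI = ereal r" using le by (cases "total_corr T pol sI") auto
      then have "tc sI n \<le> r" using le by simp
      then show ?thesis using r by (simp add: exp_neg_def)
    qed
    then show ?thesis unfolding c_def by simp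
  qed
  have each: "measure_pmf.prob (F n sI) {x. succ_prefix ST SA x} \<le> v_img T pol sI ST SA p + c" for n
  proof -
    have "measure_pmf.prob (F n sI) {x. succ_prefix ST SA x} - sqrt (1 - exp (- tc sI n))
        \<le> measure_pmf.prob (img_geo_prefix T pol sI p n) {x. succ_prefix ST SA x}" by (rule P1mix[OF sI])
    also have "\<dots> \<le> v_img T pol sI ST SA p" unfolding v_img_def by (rule reach_ge)
    finally show ?thesis using tcle[of n] by simp
  qed
  have "v_full T pol sI ST SA \<le> v_img T pol sI ST SA p + c"
    unfolding v_full_def reach_prob_def by (rule cSUP_least) (auto intro: each)
  then show ?thesis unfolding c_def by simp
qed

end

theorem theorem2:
  fixes Sl :: "'i::finite \<Rightarrow> 's set" and Al :: "'i \<Rightarrow> 'a set" and sI :: "'i \<Rightarrow> 's"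
    and T :: "'i \<Rightarrow> 's \<Rightarrow> 'a \<Rightarrow> 's pmf"
    and pol :: "('i \<Rightarrow> 's) \<Rightarrow> ('i \<Rightarrow> 'a) pmf"
    and ST SA :: "('i \<Rightarrow> 's) set" and p :: real
  assumes finS: "\<And>i. finite (Sl i)" and finA: "\<And>i. finite (Al i)"
    and init: "\<And>i. sI i \<in> Sl i"
    and trans: "\<And>i s a. s \<in> Sl i \<Longrightarrow> a \<in> Al i \<Longrightarrow> set_pmf (T i s a) \<subseteq> Sl i"
    and policy: "\<And>s. (\<forall>i. s i \<in> Sl i) \<Longrightarrow> set_pmf (pol s) \<subseteq> {a. \<forall>i. a i \<in> Al i}"
    and vpos: "v_full T pol sI ST SA > 0"
    and p: "0 \<le> p" "p \<le> 1"
  shows "v_img T pol sI ST SA p \<ge>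
           max (v_full T pol sI ST SA - sqrt (1 - exp_neg (total_corr T pol sI)))
               (v_full T pol sI ST SA *
                  (1 - p) powr (enn2real (l_full T pol sI ST SA) / v_full T pol sI ST SA))"
proof -
  interpret game Sl Al T pol using finS finA trans policy by unfold_locales
  have sI: "sI \<in> GS" using init by (simp add: GS_def)
  show ?thesis using bound1[OF sI, of ST SA p] bound2[OF sI p vpos] by simp
qed

end
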